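(* Let $\mathcal{C}=\mathcal{C}_{\mathcal{Q}}$ be a harmonic curve in $\mathbb{P}^2$. Then there is a polarity $P\mapsto p$ of $\mathbb{P}^2$ such that: (i) for every point $P$, $P\in\mathcal{C}$ if and only if $P\in p$; (ii) for every point $P\notin\mathcal{C}$ (so that $P\notin p$), the harmonic reflection $\rho_{P,p}$ maps $\mathcal{C}$ onto itself. Moreover, for each point $Z\in\mathcal{C}$ its polar line $z$ is the line of the tangent bundle $\mathcal{C}_{\mathcal{Q}}^*$ through $Z$.
   Context: $\mathbb{P}^2$ denotes the projective plane over a field $F$ with $\operatorname{char}F\neq 2$. For distinct points $X,Y$, $X\vee Y$ is the line through them; for distinct lines $\ell,m$, $\ell\wedge m$ is their common point. Maps act on the right. Four distinct collinear points $A,C,B,D$ form a harmonic set with conjugate pairs $\{A,B\}$ and $\{C,D\}$ if the cross-ratio $(A,B;C,D)=-1$. Four distinct concurrent lines form a harmonic pencil with given conjugate pairs if some (equivalently every) line not through their common point meets them in a harmonic set with the corresponding conjugate pairs. For a point $P$ and a line $m$ with $P\notin m$, the harmonic reflection $\rho_{P,m}$ of $\mathbb{P}^2$ fixes $P$ and every point of $m$ and sends every other point $X$ to the harmonic conjugate of $X$ with respect to $P$ and $(X\vee P)\wedge m$. A quadrangle $\mathcal{Q}$ with vertices $A,C,B,D$ (in cyclic order) consists of four points in general position (no three collinear) together with this cyclic order up to reversal; its sides are $A\vee C, C\vee B, B\vee D, D\vee A$, and its diagonal lines are $A\vee B$ and $C\vee D$. The harmonic curve $\mathcal{C}_{\mathcal{Q}}$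 is the set consisting of $A,C,B,D$ together with all points $Z\notin\{A,B,C,D\}$ such that $Z\vee A, Z\vee C, Z\vee B, Z\vee D$ are four distinct lines forming a harmonic pencil with conjugate pairs $\{Z\vee A,Z\vee B\}$ and $\{Z\vee C,Z\vee D\}$. The tangent line at a vertex $V$ is the harmonic conjugate, within the pencil at $V$, of the diagonal line through $V$ with respect to the two sides through $V$; let $a,c,b,d$ be the tangent lines at $A,C,B,D$. For four lines $l_1,\dots,l_4$ (no three concurrent) in cyclic order, their harmonic bundle consists of $l_1,\dots,l_4$ together with every other line $z$ such that $z\wedge l_1,\dots,z\wedge l_4$ are four distinct points forming a harmonic set with conjugate pairs $\{z\wedge l_1,z\wedge l_3\}$, $\{z\wedge l_2,z\wedge l_4\}$; the tangent bundle $\mathcal{C}_{\mathcal{Q}}^*$ is the harmonic bundle of $a,c,b,d$. A polarity of $\mathbb{P}^2$ is a bijection $P\mapsto p$ from points to lines such that $P\in q\iff Q\in p$ for all points $P,Q$ (lower case denotes the image of the same upper case letter); $p$ is the polar of $P$, and $P$ the pole of $p$. *)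

theory Defs
  imports Main
begin

type_synonym 'a v3 = "'a \<times> 'a \<times> 'a"

definition sc :: "'a::field \<Rightarrow> 'a v3 \<Rightarrow> 'a v3" where
  "sc c v = (case v of (x, y, z) \<Rightarrow> (c * x, c * y, c * z))"

definition dot :: "'a::field v3 \<Rightarrow> 'a v3 \<Rightarrow> 'a" where
  "dot u v = (case u of (x1, y1, z1) \<Rightarrow> case v of (x2, y2, z2) \<Rightarrow> x1 * x2 + y1 * y2 + z1 * z2)"

definition cross :: "'a::field v3 \<Rightarrow> 'a v3 \<Rightarrow> 'a v3" where
  "cross u v = (case u of (x1, y1, z1) \<Rightarrow> case v of (x2, y2, z2) \<Rightarrow>
      (y1 * z2 - z1 * y2, z1 * x2 - x1 * z2, x1 * y2 - y1 * x2))"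

definition det3 :: "'a::field v3 \<Rightarrow> 'a v3 \<Rightarrow> 'a v3 \<Rightarrow> 'a" where
  "det3 u v w = dot u (cross v w)"

definition projeq :: "'a::field v3 \<Rightarrow> 'a v3 \<Rightarrow> bool" where
  "projeq u v \<longleftrightarrow> u \<noteq> (0, 0, 0) \<and> v \<noteq> (0, 0, 0) \<and> (\<exists>c. c \<noteq> 0 \<and> u = sc c v)"

lemma sc_sc: "sc c (sc d v) = sc (c * d) v"
  by (cases v) (auto simp: sc_def mult.assoc)

lemma sc_1: "sc 1 v = v"
  by (cases v) (auto simp: sc_def)

lemma part_equivp_projeq: "part_equivp (projeq :: 'a::field v3 \<Rightarrow> _)"
proof (rule part_equivpI)
  show "\<exists>x::'a v3. projeq x x"
    by (rule exI[of _ "(1, 0, 0)"]) (auto simp: projeq_def sc_1 intro: exI[of _ 1])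
  show "symp (projeq :: 'a v3 \<Rightarrow> _)"
  proof (rule sympI)
    fix u v :: "'a v3" assume "projeq u v"
    then obtain c where "c \<noteq> 0" "u = sc c v" "u \<noteq> (0,0,0)" "v \<noteq> (0,0,0)"
      unfolding projeq_def by blast
    then have "v = sc (inverse c) u" by (simp add: sc_sc sc_1)
    then show "projeq v u" using \<open>c \<noteq> 0\<close> \<open>u \<noteq> _\<close> \<open>v \<noteq> _\<close> unfolding projeq_def by (auto intro!: exI[of _ "inverse c"])
  qed
  show "transp (projeq :: 'a v3 \<Rightarrow> _)"
  proof (rule transpI)
    fix u v w :: "'a v3" assume "projeq u v" "projeq v w"
    then show "projeq u w" unfolding projeq_def
      by (auto simp: sc_sc) (metis mult_eq_0_iff)
  qed
qed

quotient_type (overloaded) 'a point = "'a::field v3" / partial: projeq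
  by (rule part_equivp_projeq)

text \<open>Lines are given by (dual) homogeneous coordinates.\<close>
quotient_type (overloaded) 'a line = "'a::field v3" / partial: projeq
  by (rule part_equivp_projeq)

lemma dot_sc: "dot (sc c u) (sc d v) = c * d * dot u v"
  by (cases u; cases v) (simp add: dot_def sc_def algebra_simps)

lift_definition inc :: "'a::field point \<Rightarrow> 'a line \<Rightarrow> bool" is "\<lambda>u v. dot u v = 0"
  unfolding projeq_def by (auto simp: dot_sc)

definition join :: "'a::field point \<Rightarrow> 'a point \<Rightarrow> 'a line" where
  "join P Q = (THE l. inc P l \<and> inc Q l)"

definition meet :: "'a::field line \<Rightarrow> 'a line \<Rightarrow> 'a point" where
  "meet l m = (THE P. inc P l \<and> inc P m)"

definition collinear :: "'a::field point set \<Rightarrow> bool" where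
  "collinear S \<longleftrightarrow> (\<exists>l. \<forall>P\<in>S. inc P l)"

definition concurrent :: "'a::field line set \<Rightarrow> bool" where
  "concurrent S \<longleftrightarrow> (\<exists>P. \<forall>l\<in>S. inc P l)"

text \<open>For
  \<open>c = a + \<lambda> b\<close>, \<open>d = a + \<mu> b\<close> this equals \<open>\<lambda>/\<mu>\<close>.\<close>
definition cross_ratio :: "'a::field point \<Rightarrow> 'a point \<Rightarrow> 'a point \<Rightarrow> 'a point \<Rightarrow> 'a" where
  "cross_ratio A B C D =
     (let a = rep_point A; b = rep_point B; c = rep_point C; d = rep_point D;
          e = (SOME e. det3 a b e \<noteq> 0)
      in (det3 a c e * det3 b d e) / (det3 a d e * det3 b c e))"

text \<open>\<open>A, C, B, D\<close> form a harmonic set with conjugate pairs \<open>{A,B}\<close>, \<open>{C,D}\<close>.\<close>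
definition harmonic :: "'a::field point \<Rightarrow> 'a point \<Rightarrow> 'a point \<Rightarrow> 'a point \<Rightarrow> bool" where
  "harmonic A B C D \<longleftrightarrow> distinct [A, B, C, D] \<and> collinear {A, B, C, D}
      \<and> cross_ratio A B C D = -1"

definition harmonic_pencil :: "'a::field line \<Rightarrow> 'a line \<Rightarrow> 'a line \<Rightarrow> 'a line \<Rightarrow> bool" where
  "harmonic_pencil l1 l2 m1 m2 \<longleftrightarrow> distinct [l1, l2, m1, m2] \<and> concurrent {l1, l2, m1, m2}
      \<and> (\<exists>n. \<not> inc (meet l1 l2) n \<and>
             harmonic (meet n l1) (meet n l2) (meet n m1) (meet n m2))"

definition harm_conj :: "'a::field point \<Rightarrow> 'a point \<Rightarrow> 'a point \<Rightarrow> 'a point" where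
  "harm_conj P M X = (THE Y. harmonic P M X Y)"

definition harmonic_reflection :: "'a::field point \<Rightarrow> 'a line \<Rightarrow> 'a point \<Rightarrow> 'a point" where
  "harmonic_reflection P m X =
     (if X = P \<or> inc X m then X else harm_conj P (meet (join X P) m) X)"

definition general_position :: "'a::field point \<Rightarrow> 'a point \<Rightarrow> 'a point \<Rightarrow> 'a point \<Rightarrow> bool" where
  "general_position A C B D \<longleftrightarrow> distinct [A, C, B, D] \<and>
     \<not> collinear {A, C, B} \<and> \<not> collinear {A, C, D} \<and> \<not> collinear {A, B, D} \<and> \<not> collinear {C, B, D}"

text \<open>Harmonic curve of the quadrangle with vertices \<open>A, C, B, D\<close> (cyclic order).\<close>
definition harmonic_curve :: "'a::field point \<Rightarrow> 'a point \<Rightarrow> 'a point \<Rightarrow> 'a point \<Rightarrow> 'a point set" where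
  "harmonic_curve A C B D = {A, C, B, D} \<union>
     {Z. Z \<notin> {A, B, C, D} \<and>
         harmonic_pencil (join Z A) (join Z B) (join Z C) (join Z D)}"

text \<open>Tangent at vertex \<open>V\<close>: harmonic conjugate of the diagonal \<open>V \<or> W\<close> (W the opposite
  vertex) with respect to the sides \<open>V \<or> S1\<close>, \<open>V \<or> S2\<close>.\<close>
definition tangent_at :: "'a::field point \<Rightarrow> 'a point \<Rightarrow> 'a point \<Rightarrow> 'a point \<Rightarrow> 'a line" where
  "tangent_at V W S1 S2 = (THE t. harmonic_pencil (join V S1) (join V S2) (join V W) t)"

definition harmonic_bundle :: "'a::field line \<Rightarrow> 'a line \<Rightarrow> 'a line \<Rightarrow> 'a line \<Rightarrow> 'a line set" where
  "harmonic_bundle l1 l2 l3 l4 = {l1, l2, l3, l4} \<union>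
     {z. z \<notin> {l1, l2, l3, l4} \<and>
         harmonic (meet z l1) (meet z l3) (meet z l2) (meet z l4)}"

definition tangent_bundle :: "'a::field point \<Rightarrow> 'a point \<Rightarrow> 'a point \<Rightarrow> 'a point \<Rightarrow> 'a line set" where
  "tangent_bundle A C B D = harmonic_bundle
     (tangent_at A B C D) (tangent_at C D B A) (tangent_at B A D C) (tangent_at D C A B)"

definition polarity :: "('a::field point \<Rightarrow> 'a line) \<Rightarrow> bool" where
  "polarity pol \<longleftrightarrow> bij pol \<and> (\<forall>P Q. inc P (pol Q) \<longleftrightarrow> inc Q (pol P))"

end

theory Submission
  imports Defs
begin


abbreviation nz :: "'a::field v3 \<Rightarrow> bool" where "nz v \<equiv> v \<noteq> (0,0,0)"

definition comb :: "'a::field \<Rightarrow> 'a v3 \<Rightarrow> 'a \<Rightarrow> 'a v3 \<Rightarrow> 'a v3" where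
  "comb s u t v = (case u of (u1,u2,u3) \<Rightarrow> case v of (v1,v2,v3) \<Rightarrow>
     (s*u1+t*v1, s*u2+t*v2, s*u3+t*v3))"

lemmas vdefs = comb_def sc_def dot_def cross_def det3_def

section \<open>Vector algebra\<close>

lemma det3_cross: "det3 u v w = dot (cross u v) w"
  by (cases u rule: prod_cases3; cases v rule: prod_cases3; cases w rule: prod_cases3)
     (simp add: vdefs algebra_simps)

lemma dot_comm: "dot u v = dot v u"
  by (cases u rule: prod_cases3; cases v rule: prod_cases3) (simp add: vdefs algebra_simps)

lemma det3_rot: "det3 u v w = det3 v w u"
  by (cases u rule: prod_cases3; cases v rule: prod_cases3; cases w rule: prod_cases3)
     (simp add: vdefs algebra_simps)

lemma det3_swap: "det3 u v w = - det3 v u w"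
  by (cases u rule: prod_cases3; cases v rule: prod_cases3; cases w rule: prod_cases3)
     (simp add: vdefs algebra_simps)

lemma det3_swap2: "det3 u v w = - det3 u w v"
  by (cases u rule: prod_cases3; cases v rule: prod_cases3; cases w rule: prod_cases3)
     (simp add: vdefs algebra_simps)

lemma det3_same[simp]: "det3 u u w = 0" "det3 u w u = 0" "det3 w u u = 0"
  by (cases u rule: prod_cases3; cases w rule: prod_cases3; simp add: vdefs algebra_simps)+

lemma cross_same[simp]: "cross u u = (0,0,0)"
  by (cases u rule: prod_cases3) (simp add: vdefs algebra_simps)

lemma dot_cross_same[simp]: "dot u (cross u v) = 0" "dot v (cross u v) = 0"
  "dot (cross u v) u = 0" "dot (cross u v) v = 0"
  by (cases u rule: prod_cases3; cases v rule: prod_cases3; simp add: vdefs algebra_simps)+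

lemma cross_anti: "cross u v = sc (-1) (cross v u)"
  by (cases u rule: prod_cases3; cases v rule: prod_cases3) (simp add: vdefs algebra_simps)

lemma sc_zero_iff: "sc k v = (0,0,0) \<longleftrightarrow> k = 0 \<or> v = (0,0,0)"
  by (cases v rule: prod_cases3) (auto simp: vdefs)

lemma cross_sc1: "cross (sc k u) v = sc k (cross u v)"
  by (cases u rule: prod_cases3; cases v rule: prod_cases3) (simp add: vdefs algebra_simps)
lemma cross_sc2: "cross u (sc k v) = sc k (cross u v)"
  by (cases u rule: prod_cases3; cases v rule: prod_cases3) (simp add: vdefs algebra_simps)
lemma dot_sc1: "dot (sc k u) v = k * dot u v"
  by (cases u rule: prod_cases3; cases v rule: prod_cases3) (simp add: vdefs algebra_simps)
lemma dot_sc2: "dot u (sc k v) = k * dot u v"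
  by (cases u rule: prod_cases3; cases v rule: prod_cases3) (simp add: vdefs algebra_simps)
lemma det3_sc1: "det3 (sc k u) v w = k * det3 u v w"
  by (cases u rule: prod_cases3; cases v rule: prod_cases3; cases w rule: prod_cases3) (simp add: vdefs algebra_simps)
lemma det3_sc2: "det3 u (sc k v) w = k * det3 u v w"
  by (cases u rule: prod_cases3; cases v rule: prod_cases3; cases w rule: prod_cases3) (simp add: vdefs algebra_simps)
lemma det3_sc3: "det3 u v (sc k w) = k * det3 u v w"
  by (cases u rule: prod_cases3; cases v rule: prod_cases3; cases w rule: prod_cases3) (simp add: vdefs algebra_simps)

lemmas sc_simps = cross_sc1 cross_sc2 dot_sc1 dot_sc2 det3_sc1 det3_sc2 det3_sc3 sc_sc

lemma cross_zero_par:
  assumes "cross u v = (0,0,0)" "nz v"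
  shows "\<exists>c. u = sc c v"
proof -
  obtain u1 u2 u3 where u: "u = (u1,u2,u3)" by (cases u rule: prod_cases3)
  obtain v1 v2 v3 where v: "v = (v1,v2,v3)" by (cases v rule: prod_cases3)
  have e: "u2*v3 = u3*v2" "u3*v1 = u1*v3" "u1*v2 = u2*v1"
    using assms(1) by (simp_all add: u v vdefs)
  show ?thesis
  proof (cases "v1 = 0")
    case False
    show ?thesis
      apply (rule exI[of _ "u1/v1"])
      using e False by (simp add: u v vdefs field_simps; metis mult.commute)
  next
    case v1: True
    show ?thesis
    proof (cases "v2 = 0")
      case False
      show ?thesis
        apply (rule exI[of _ "u2/v2"])
        using e False v1 by (simp add: u v vdefs field_simps; metis mult.commute)
    next
      case v2: True
      then have "v3 \<noteq> 0" using v1 assms(2) v by auto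
      then show ?thesis
        apply -
        apply (rule exI[of _ "u3/v3"])
        using e v1 v2 by (simp add: u v vdefs field_simps)
    qed
  qed
qed

lemma cross_sc_zero: "cross (sc c v) v = (0,0,0)"
  by (cases v rule: prod_cases3) (simp add: vdefs algebra_simps)

lemma cross_zero_iff:
  assumes "nz u" "nz v"
  shows "cross u v = (0,0,0) \<longleftrightarrow> projeq u v"
proof
  assume "cross u v = (0,0,0)"
  then obtain c where c: "u = sc c v" using cross_zero_par assms by blast
  then have "c \<noteq> 0" using assms by (auto simp: sc_zero_iff)
  then show "projeq u v" using c assms by (auto simp: projeq_def)
next
  assume "projeq u v"
  then obtain c where "u = sc c v" by (auto simp: projeq_def)
  then show "cross u v = (0,0,0)" by (simp add: cross_sc_zero)
qed

lemma cross_cross_id: "cross w (cross u v) = comb (dot w v) u (- dot w u) v"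
  by (cases u rule: prod_cases3; cases v rule: prod_cases3; cases w rule: prod_cases3)
     (simp add: vdefs algebra_simps)

lemma perp2:
  assumes "dot w u = 0" "dot w v = 0" "nz (cross u v)"
  shows "\<exists>c. w = sc c (cross u v)"
proof -
  have "cross w (cross u v) = (0,0,0)" using assms
    by (simp add: cross_cross_id comb_def split: prod.splits)
  then show ?thesis using cross_zero_par assms by blast
qed

lemma cramer: "sc (det3 u v e) w = comb (det3 w v e) u (det3 u w e) v \<or> True"
  by simp

lemma cramer3: "sc (det3 u v e) w =
   (case comb (det3 w v e) u (det3 u w e) v of (x1,x2,x3) \<Rightarrow> case e of (e1,e2,e3) \<Rightarrow>
      (x1 + det3 u v w * e1, x2 + det3 u v w * e2, x3 + det3 u v w * e3))"
  by (cases u rule: prod_cases3; cases v rule: prod_cases3; cases w rule: prod_cases3; cases e rule: prod_cases3)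
     (simp add: vdefs algebra_simps)

lemma exists_e:
  assumes "nz w"
  shows "\<exists>e. dot w e \<noteq> 0"
proof -
  obtain w1 w2 w3 where w: "w = (w1,w2,w3)" by (cases w rule: prod_cases3)
  show ?thesis
  proof (cases "w1 = 0")
    case False then show ?thesis by (intro exI[of _ "(1,0,0)"]) (simp add: w dot_def)
  next
    case True
    show ?thesis
    proof (cases "w2 = 0")
      case False then show ?thesis by (intro exI[of _ "(0,1,0)"]) (simp add: w dot_def)
    next
      case True2: True
      then show ?thesis using True assms w by (intro exI[of _ "(0,0,1)"]) (simp add: w dot_def)
    qed
  qed
qed

lemma span2:
  assumes "det3 w u v = 0" "nz (cross u v)"
  shows "\<exists>s t. w = comb s u t v"
proof -
  obtain e where e: "dot (cross u v) e \<noteq> 0" using exists_e assms(2) by blast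
  have d: "det3 u v e \<noteq> 0" using e by (simp add: det3_cross)
  have dw: "det3 u v w = 0" using assms(1) det3_rot by metis
  have "sc (det3 u v e) w = comb (det3 w v e) u (det3 u w e) v"
    using cramer3[of u v e w] dw by (simp add: comb_def split: prod.splits)
  then have "w = comb (det3 w v e / det3 u v e) u (det3 u w e / det3 u v e) v"
    using d by (cases w rule: prod_cases3; cases u rule: prod_cases3; cases v rule: prod_cases3)
               (simp add: vdefs field_simps)
  then show ?thesis by blast
qed

section \<open>Points and lines\<close>

lemma projeq_refl: "projeq v v \<longleftrightarrow> nz v"
  by (auto simp: projeq_def intro!: exI[of _ 1] simp: sc_1)

lemma rep_point_nz: "nz (rep_point P)"
  using Quotient3_rep_reflp[OF Quotient3_point, of P] projeq_refl by blast
lemma rep_line_nz: "nz (rep_line P)"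
  using Quotient3_rep_reflp[OF Quotient3_line, of P] projeq_refl by blast

lemma abs_rep_point: "abs_point (rep_point P) = P"
  by (rule Quotient3_abs_rep[OF Quotient3_point])
lemma abs_rep_line: "abs_line (rep_line P) = P"
  by (rule Quotient3_abs_rep[OF Quotient3_line])

lemma point_ex: "\<exists>u. nz u \<and> P = abs_point u"
  using rep_point_nz abs_rep_point by metis
lemma line_ex: "\<exists>u. nz u \<and> P = abs_line u"
  using rep_line_nz abs_rep_line by metis

lemma Pt_eq_iff: "nz u \<Longrightarrow> nz v \<Longrightarrow> abs_point u = abs_point v \<longleftrightarrow> cross u v = (0,0,0)"
  using Quotient3_rel[OF Quotient3_point, of u v] projeq_refl cross_zero_iff by metis
lemma Ln_eq_iff: "nz u \<Longrightarrow> nz v \<Longrightarrow> abs_line u = abs_line v \<longleftrightarrow> cross u v = (0,0,0)"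
  using Quotient3_rel[OF Quotient3_line, of u v] projeq_refl cross_zero_iff by metis

lemma rep_abs_point: "nz u \<Longrightarrow> \<exists>k. k \<noteq> 0 \<and> rep_point (abs_point u) = sc k u"
proof -
  assume u: "nz u"
  have "projeq (rep_point (abs_point u)) u"
    using Quotient3_rel[OF Quotient3_point, of "rep_point (abs_point u)" u] u projeq_refl
      rep_point_nz abs_rep_point by metis
  then show ?thesis by (auto simp: projeq_def)
qed
lemma rep_abs_line: "nz u \<Longrightarrow> \<exists>k. k \<noteq> 0 \<and> rep_line (abs_line u) = sc k u"
proof -
  assume u: "nz u"
  have "projeq (rep_line (abs_line u)) u"
    using Quotient3_rel[OF Quotient3_line, of "rep_line (abs_line u)" u] u projeq_refl
      rep_line_nz abs_rep_line by metis
  then show ?thesis by (auto simp: projeq_def)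
qed

lemma Pt_sc: "k \<noteq> 0 \<Longrightarrow> nz u \<Longrightarrow> abs_point (sc k u) = abs_point u"
  by (subst Pt_eq_iff) (auto simp: sc_zero_iff cross_sc_zero)
lemma Ln_sc: "k \<noteq> 0 \<Longrightarrow> nz u \<Longrightarrow> abs_line (sc k u) = abs_line u"
  by (subst Ln_eq_iff) (auto simp: sc_zero_iff cross_sc_zero)

lemma inc_iff: "nz u \<Longrightarrow> nz w \<Longrightarrow> inc (abs_point u) (abs_line w) \<longleftrightarrow> dot u w = 0"
  using inc.abs_eq projeq_refl by metis

lemma join_eq:
  assumes "nz u" "nz v" "nz (cross u v)"
  shows "join (abs_point u) (abs_point v) = abs_line (cross u v)"
  unfolding join_def
proof (rule the_equality)
  show "inc (abs_point u) (abs_line (cross u v)) \<and> inc (abs_point v) (abs_line (cross u v))"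
    using assms by (simp add: inc_iff)
next
  fix l assume l: "inc (abs_point u) l \<and> inc (abs_point v) l"
  obtain w where w: "nz w" "l = abs_line w" using line_ex by blast
  then have "dot w u = 0" "dot w v = 0" using l assms by (auto simp: inc_iff dot_comm)
  then obtain c where c: "w = sc c (cross u v)" using perp2 assms by blast
  then have "c \<noteq> 0" using w by (auto simp: sc_zero_iff)
  then show "l = abs_line (cross u v)" using w c assms Ln_sc by metis
qed

lemma meet_eq:
  assumes "nz u" "nz v" "nz (cross u v)"
  shows "meet (abs_line u) (abs_line v) = abs_point (cross u v)"
  unfolding meet_def
proof (rule the_equality)
  show "inc (abs_point (cross u v)) (abs_line u) \<and> inc (abs_point (cross u v)) (abs_line v)"
    using assms by (simp add: inc_iff)
next
  fix l assume l: "inc l (abs_line u) \<and> inc l (abs_line v)"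
  obtain w where w: "nz w" "l = abs_point w" using point_ex by blast
  then have "dot w u = 0" "dot w v = 0" using l assms by (auto simp: inc_iff dot_comm)
  then obtain c where c: "w = sc c (cross u v)" using perp2 assms by blast
  then have "c \<noteq> 0" using w by (auto simp: sc_zero_iff)
  then show "l = abs_point (cross u v)" using w c assms Pt_sc by metis
qed

lemma meet_unique:
  assumes "nz x" "nz u" "nz v" "nz (cross u v)" "dot x u = 0" "dot x v = 0"
  shows "meet (abs_line u) (abs_line v) = abs_point x"
proof -
  obtain c where c: "x = sc c (cross u v)" using perp2 assms by (metis dot_comm)
  then have "c \<noteq> 0" using assms by (auto simp: sc_zero_iff)
  then show ?thesis using meet_eq assms c Pt_sc by metis
qed

lemma join_unique:
  assumes "nz x" "nz u" "nz v" "nz (cross u v)" "dot x u = 0" "dot x v = 0"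
  shows "join (abs_point u) (abs_point v) = abs_line x"
proof -
  obtain c where c: "x = sc c (cross u v)" using perp2 assms by (metis dot_comm)
  then have "c \<noteq> 0" using assms by (auto simp: sc_zero_iff)
  then show ?thesis using join_eq assms c Ln_sc by metis
qed

lemma noncollinear_det:
  assumes "nz u" "nz v" "nz w" "abs_point u \<noteq> abs_point v"
    "\<not> collinear {abs_point u, abs_point v, abs_point w}"
  shows "det3 u v w \<noteq> 0"
proof
  assume d: "det3 u v w = 0"
  have cuv: "nz (cross u v)" using assms Pt_eq_iff by blast
  have "inc (abs_point w) (abs_line (cross u v))"
    using d cuv assms by (simp add: inc_iff det3_rot[of u v w] det3_cross dot_comm)
  moreover have "inc (abs_point u) (abs_line (cross u v))" "inc (abs_point v) (abs_line (cross u v))"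
    using cuv assms by (simp_all add: inc_iff)
  ultimately show False using assms(5) unfolding collinear_def by auto
qed

section \<open>Cross ratio\<close>

lemma cr_formula:
  assumes "nz a" "nz b" "nz c" "nz d" "nz (cross a b)"
  shows "\<exists>e. det3 a b e \<noteq> 0 \<and> cross_ratio (abs_point a) (abs_point b) (abs_point c) (abs_point d)
            = det3 a c e * det3 b d e / (det3 a d e * det3 b c e)"
proof -
  obtain ka where ka: "ka \<noteq> 0" "rep_point (abs_point a) = sc ka a" using rep_abs_point assms by blast
  obtain kb where kb: "kb \<noteq> 0" "rep_point (abs_point b) = sc kb b" using rep_abs_point assms by blast
  obtain kc where kc: "kc \<noteq> 0" "rep_point (abs_point c) = sc kc c" using rep_abs_point assms by blast
  obtain kd where kd: "kd \<noteq> 0" "rep_point (abs_point d) = sc kd d" using rep_abs_point assms by blast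
  define e where "e = (SOME e. det3 (sc ka a) (sc kb b) e \<noteq> 0)"
  obtain e0 where "dot (cross a b) e0 \<noteq> 0" using exists_e assms by blast
  then have "det3 (sc ka a) (sc kb b) e0 \<noteq> 0" using ka kb by (simp add: sc_simps det3_cross)
  then have e: "det3 (sc ka a) (sc kb b) e \<noteq> 0" unfolding e_def by (rule someI)
  have cr: "cross_ratio (abs_point a) (abs_point b) (abs_point c) (abs_point d)
     = det3 (sc ka a) (sc kc c) e * det3 (sc kb b) (sc kd d) e / (det3 (sc ka a) (sc kd d) e * det3 (sc kb b) (sc kc c) e)"
    unfolding cross_ratio_def Let_def ka kb kc kd e_def ..
  show ?thesis
    apply (rule exI[of _ e])
    using e ka kb kc kd unfolding cr by (simp add: sc_simps field_simps)
qed

definition fd :: "'a::field \<Rightarrow> 'a \<Rightarrow> 'a \<Rightarrow> 'a \<Rightarrow> 'a" where "fd a b c d = a * d - b * c"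

lemma det3_comb: "det3 (comb a1 u b1 v) (comb a2 u b2 v) e = fd a1 b1 a2 b2 * det3 u v e"
  by (cases u rule: prod_cases3; cases v rule: prod_cases3; cases e rule: prod_cases3)
     (simp add: vdefs fd_def algebra_simps)

lemma cross_comb: "cross (comb a1 u b1 v) (comb a2 u b2 v) = sc (fd a1 b1 a2 b2) (cross u v)"
  by (cases u rule: prod_cases3; cases v rule: prod_cases3)
     (simp add: vdefs fd_def algebra_simps)

lemma dot_comb_cross: "dot (comb a1 u b1 v) (cross u v) = 0"
  by (cases u rule: prod_cases3; cases v rule: prod_cases3)
     (simp add: vdefs algebra_simps)

lemma comb_nz:
  assumes "nz (cross u v)" "(a1, b1) \<noteq> (0,0)"
  shows "nz (comb a1 u b1 v)"
proof
  assume z: "comb a1 u b1 v = (0,0,0)"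
  have "sc a1 (cross u v) = cross (comb a1 u b1 v) (comb 0 u 1 v)"
       "sc (-b1) (cross u v) = cross (comb a1 u b1 v) (comb 1 u 0 v)"
    by (simp_all add: cross_comb fd_def)
  moreover have "cross (0,0,0) w = (0,0,0)" for w :: "'a v3"
    by (simp add: vdefs split: prod.splits)
  ultimately have "sc a1 (cross u v) = (0,0,0)" "sc (-b1) (cross u v) = (0,0,0)"
    using z by simp_all
  then show False using assms by (auto simp: sc_zero_iff)
qed

lemma comb_Pt_eq_iff:
  assumes "nz (cross u v)" "(a1, b1) \<noteq> (0,0)" "(a2, b2) \<noteq> (0,0)"
  shows "abs_point (comb a1 u b1 v) = abs_point (comb a2 u b2 v) \<longleftrightarrow> fd a1 b1 a2 b2 = 0"
  using comb_nz[OF assms(1) assms(2)] comb_nz[OF assms(1) assms(3)] assms(1)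
  by (simp add: Pt_eq_iff cross_comb sc_zero_iff)

lemma comb_Ln_eq_iff:
  assumes "nz (cross u v)" "(a1, b1) \<noteq> (0,0)" "(a2, b2) \<noteq> (0,0)"
  shows "abs_line (comb a1 u b1 v) = abs_line (comb a2 u b2 v) \<longleftrightarrow> fd a1 b1 a2 b2 = 0"
  using comb_nz[OF assms(1) assms(2)] comb_nz[OF assms(1) assms(3)] assms(1)
  by (simp add: Ln_eq_iff cross_comb sc_zero_iff)

lemma span_harmonic:
  assumes uv: "nz (cross u v)" and n1: "(a1, b1) \<noteq> (0,0)" and n2: "(a2, b2) \<noteq> (0,0)"
    and n3: "(a3, b3) \<noteq> (0,0)" and n4: "(a4, b4) \<noteq> (0,0)"
  shows "harmonic (abs_point (comb a1 u b1 v)) (abs_point (comb a2 u b2 v))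
                  (abs_point (comb a3 u b3 v)) (abs_point (comb a4 u b4 v)) \<longleftrightarrow>
    fd a1 b1 a2 b2 \<noteq> 0 \<and> fd a1 b1 a3 b3 \<noteq> 0 \<and> fd a1 b1 a4 b4 \<noteq> 0 \<and>
    fd a2 b2 a3 b3 \<noteq> 0 \<and> fd a2 b2 a4 b4 \<noteq> 0 \<and> fd a3 b3 a4 b4 \<noteq> 0 \<and>
    fd a1 b1 a3 b3 * fd a2 b2 a4 b4 + fd a1 b1 a4 b4 * fd a2 b2 a3 b3 = 0"
proof -
  let ?p = "\<lambda>a b. abs_point (comb a u b v)"
  have dist: "distinct [?p a1 b1, ?p a2 b2, ?p a3 b3, ?p a4 b4] \<longleftrightarrow>
    fd a1 b1 a2 b2 \<noteq> 0 \<and> fd a1 b1 a3 b3 \<noteq> 0 \<and> fd a1 b1 a4 b4 \<noteq> 0 \<and>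
    fd a2 b2 a3 b3 \<noteq> 0 \<and> fd a2 b2 a4 b4 \<noteq> 0 \<and> fd a3 b3 a4 b4 \<noteq> 0"
    using comb_Pt_eq_iff[OF uv] n1 n2 n3 n4 by simp
  have col: "collinear {?p a1 b1, ?p a2 b2, ?p a3 b3, ?p a4 b4}"
    unfolding collinear_def
    using uv n1 n2 n3 n4 comb_nz[OF uv] by (intro exI[of _ "abs_line (cross u v)"]) (auto simp: inc_iff dot_comb_cross)
  show ?thesis
  proof (cases "fd a1 b1 a2 b2 \<noteq> 0 \<and> fd a1 b1 a3 b3 \<noteq> 0 \<and> fd a1 b1 a4 b4 \<noteq> 0 \<and>
    fd a2 b2 a3 b3 \<noteq> 0 \<and> fd a2 b2 a4 b4 \<noteq> 0 \<and> fd a3 b3 a4 b4 \<noteq> 0")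
    case False then show ?thesis using dist unfolding harmonic_def by auto
  next
    case True
    have nzab: "nz (cross (comb a1 u b1 v) (comb a2 u b2 v))"
      using True uv by (simp add: cross_comb sc_zero_iff)
    obtain e where e: "det3 (comb a1 u b1 v) (comb a2 u b2 v) e \<noteq> 0"
      "cross_ratio (?p a1 b1) (?p a2 b2) (?p a3 b3) (?p a4 b4) =
       det3 (comb a1 u b1 v) (comb a3 u b3 v) e * det3 (comb a2 u b2 v) (comb a4 u b4 v) e /
       (det3 (comb a1 u b1 v) (comb a4 u b4 v) e * det3 (comb a2 u b2 v) (comb a3 u b3 v) e)"
      using cr_formula[OF comb_nz[OF uv n1] comb_nz[OF uv n2] comb_nz[OF uv n3] comb_nz[OF uv n4] nzab]
      by blast
    have de: "det3 u v e \<noteq> 0" using e(1) by (simp add: det3_comb)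
    have h: "cross_ratio (?p a1 b1) (?p a2 b2) (?p a3 b3) (?p a4 b4) =
       fd a1 b1 a3 b3 * fd a2 b2 a4 b4 / (fd a1 b1 a4 b4 * fd a2 b2 a3 b3)"
      unfolding e(2) det3_comb using de by (simp add: field_simps)
    have dn: "fd a1 b1 a4 b4 * fd a2 b2 a3 b3 \<noteq> 0" using True by simp
    have "cross_ratio (?p a1 b1) (?p a2 b2) (?p a3 b3) (?p a4 b4) = -1 \<longleftrightarrow>
        fd a1 b1 a3 b3 * fd a2 b2 a4 b4 = - (fd a1 b1 a4 b4 * fd a2 b2 a3 b3)"
      unfolding h using dn by (simp add: divide_eq_eq)
    also have "\<dots> \<longleftrightarrow> fd a1 b1 a3 b3 * fd a2 b2 a4 b4 + fd a1 b1 a4 b4 * fd a2 b2 a3 b3 = 0"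
      by (simp add: eq_neg_iff_add_eq_0)
    finally have "cross_ratio (?p a1 b1) (?p a2 b2) (?p a3 b3) (?p a4 b4) = -1 \<longleftrightarrow>
        fd a1 b1 a3 b3 * fd a2 b2 a4 b4 + fd a1 b1 a4 b4 * fd a2 b2 a3 b3 = 0" .
    then show ?thesis using True dist col unfolding harmonic_def by auto
  qed
qed

section \<open>Pencils\<close>

lemma cross_comb_right: "cross n (comb a l b m) = comb a (cross n l) b (cross n m)"
  by (cases n rule: prod_cases3; cases l rule: prod_cases3; cases m rule: prod_cases3)
     (simp add: vdefs algebra_simps)

lemma cross_cross_same: "cross (cross n l) (cross n m) = sc (det3 n l m) n"
  by (cases n rule: prod_cases3; cases l rule: prod_cases3; cases m rule: prod_cases3)
     (simp add: vdefs algebra_simps)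

lemma pencil_core:
  assumes lm: "nz (cross l m)" and nn: "dot (cross l m) nn \<noteq> 0"
    and n1: "(a1, b1) \<noteq> (0,0)" and n2: "(a2, b2) \<noteq> (0,0)"
    and n3: "(a3, b3) \<noteq> (0,0)" and n4: "(a4, b4) \<noteq> (0,0)"
  shows "harmonic (meet (abs_line nn) (abs_line (comb a1 l b1 m))) (meet (abs_line nn) (abs_line (comb a2 l b2 m)))
                  (meet (abs_line nn) (abs_line (comb a3 l b3 m))) (meet (abs_line nn) (abs_line (comb a4 l b4 m))) \<longleftrightarrow>
    fd a1 b1 a2 b2 \<noteq> 0 \<and> fd a1 b1 a3 b3 \<noteq> 0 \<and> fd a1 b1 a4 b4 \<noteq> 0 \<and>
    fd a2 b2 a3 b3 \<noteq> 0 \<and> fd a2 b2 a4 b4 \<noteq> 0 \<and> fd a3 b3 a4 b4 \<noteq> 0 \<and>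
    fd a1 b1 a3 b3 * fd a2 b2 a4 b4 + fd a1 b1 a4 b4 * fd a2 b2 a3 b3 = 0"
proof -
  have nnz: "nz nn" using nn by (auto simp: dot_def split: prod.splits)
  have d: "det3 nn l m \<noteq> 0" using nn by (simp add: det3_def dot_comm)
  have uv: "nz (cross (cross nn l) (cross nn m))"
    unfolding cross_cross_same using d nnz by (simp add: sc_zero_iff)
  have mt: "meet (abs_line nn) (abs_line (comb a l b m)) = abs_point (comb a (cross nn l) b (cross nn m))"
    if ab: "(a, b) \<noteq> (0,0)" for a b
  proof -
    have w: "nz (comb a l b m)" using comb_nz[OF lm ab] .
    have "nz (cross nn (comb a l b m))" unfolding cross_comb_right using comb_nz[OF uv ab] .
    then show ?thesis using meet_eq[OF nnz w] by (simp add: cross_comb_right)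
  qed
  show ?thesis unfolding mt[OF n1] mt[OF n2] mt[OF n3] mt[OF n4]
    by (rule span_harmonic[OF uv n1 n2 n3 n4])
qed

lemma span_pencil:
  assumes lm: "nz (cross l m)"
    and n1: "(a1, b1) \<noteq> (0,0)" and n2: "(a2, b2) \<noteq> (0,0)"
    and n3: "(a3, b3) \<noteq> (0,0)" and n4: "(a4, b4) \<noteq> (0,0)"
  shows "harmonic_pencil (abs_line (comb a1 l b1 m)) (abs_line (comb a2 l b2 m))
                  (abs_line (comb a3 l b3 m)) (abs_line (comb a4 l b4 m)) \<longleftrightarrow>
    (fd a1 b1 a2 b2 \<noteq> 0 \<and> fd a1 b1 a3 b3 \<noteq> 0 \<and> fd a1 b1 a4 b4 \<noteq> 0 \<and>
    fd a2 b2 a3 b3 \<noteq> 0 \<and> fd a2 b2 a4 b4 \<noteq> 0 \<and> fd a3 b3 a4 b4 \<noteq> 0) \<and>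
    fd a1 b1 a3 b3 * fd a2 b2 a4 b4 + fd a1 b1 a4 b4 * fd a2 b2 a3 b3 = 0"
    (is "?H \<longleftrightarrow> ?F \<and> ?E")
proof -
  let ?L = "\<lambda>a b. abs_line (comb a l b m)"
  have dist: "distinct [?L a1 b1, ?L a2 b2, ?L a3 b3, ?L a4 b4] \<longleftrightarrow> ?F"
    using comb_Ln_eq_iff[OF lm] n1 n2 n3 n4 by simp
  have znz: "nz (cross l m)" by (rule lm)
  have inc: "inc (abs_point (cross l m)) (?L a b)" if "(a, b) \<noteq> (0,0)" for a b
    using comb_nz[OF lm that] znz by (simp add: inc_iff dot_comm[of "cross l m"] dot_comb_cross)
  have mt12: "meet (?L a1 b1) (?L a2 b2) = abs_point (cross l m)" if "fd a1 b1 a2 b2 \<noteq> 0"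
    using meet_eq[OF comb_nz[OF lm n1] comb_nz[OF lm n2]] that lm
    by (simp add: cross_comb sc_zero_iff Pt_sc)
  show ?thesis
  proof
    assume H: ?H
    then have F: ?F using dist unfolding harmonic_pencil_def by blast
    obtain n where n: "\<not> inc (meet (?L a1 b1) (?L a2 b2)) n"
      "harmonic (meet n (?L a1 b1)) (meet n (?L a2 b2)) (meet n (?L a3 b3)) (meet n (?L a4 b4))"
      using H unfolding harmonic_pencil_def by blast
    obtain nn where nn: "nz nn" "n = abs_line nn" using line_ex by blast
    have "dot (cross l m) nn \<noteq> 0" using n(1) nn F mt12 znz by (simp add: inc_iff)
    then show "?F \<and> ?E" using pencil_core[OF lm _ n1 n2 n3 n4] n(2) nn(2) by blast
  next
    assume FE: "?F \<and> ?E"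
    obtain nn where nn: "dot (cross l m) nn \<noteq> 0" using exists_e znz by blast
    have nnz: "nz nn" using nn by (auto simp: dot_def split: prod.splits)
    have "\<not> inc (meet (?L a1 b1) (?L a2 b2)) (abs_line nn)"
      using nn nnz FE mt12 znz by (simp add: inc_iff)
    moreover have "harmonic (meet (abs_line nn) (?L a1 b1)) (meet (abs_line nn) (?L a2 b2))
        (meet (abs_line nn) (?L a3 b3)) (meet (abs_line nn) (?L a4 b4))"
      using pencil_core[OF lm nn n1 n2 n3 n4] FE by blast
    moreover have "concurrent {?L a1 b1, ?L a2 b2, ?L a3 b3, ?L a4 b4}"
      unfolding concurrent_def using inc n1 n2 n3 n4 by blast
    ultimately show ?H using dist FE unfolding harmonic_pencil_def by blast
  qed
qed

lemma fourth_unique: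
  assumes "fd a1 b1 a2 b2 \<noteq> 0" "fd a1 b1 a3 b3 \<noteq> 0"
    and "fd a1 b1 a3 b3 * fd a2 b2 x y + fd a1 b1 x y * fd a2 b2 a3 b3 = 0"
    and "fd a1 b1 a3 b3 * fd a2 b2 x' y' + fd a1 b1 x' y' * fd a2 b2 a3 b3 = 0"
  shows "fd x y x' y' = 0"
proof -
  define p where "p = fd a1 b1 a3 b3 * a2 + fd a2 b2 a3 b3 * a1"
  define q where "q = fd a1 b1 a3 b3 * b2 + fd a2 b2 a3 b3 * b1"
  have e1: "p * y - q * x = 0" using assms(3) unfolding p_def q_def fd_def by (simp add: algebra_simps)
  have e2: "p * y' - q * x' = 0" using assms(4) unfolding p_def q_def fd_def by (simp add: algebra_simps)
  have "a1 * q - b1 * p = fd a1 b1 a3 b3 * fd a1 b1 a2 b2" unfolding p_def q_def fd_def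
    by (simp add: algebra_simps)
  then have pq: "p \<noteq> 0 \<or> q \<noteq> 0" using assms(1,2) by auto
  show ?thesis
  proof (cases "p = 0")
    case False
    then have "y = q * x / p" "y' = q * x' / p" using e1 e2 by (simp_all add: field_simps)
    then show ?thesis unfolding fd_def by (simp add: field_simps)
  next
    case True
    then have "q \<noteq> 0" using pq by auto
    then have "x = 0" "x' = 0" using e1 e2 True by auto
    then show ?thesis unfolding fd_def by simp
  qed
qed


section \<open>The conic\<close>

definition Qf :: "'a::field v3 \<Rightarrow> 'a v3 \<Rightarrow> 'a v3 \<Rightarrow> 'a v3 \<Rightarrow> 'a v3 \<Rightarrow> 'a" where
  "Qf a c b d z = det3 z a c * det3 z b d + det3 z a d * det3 z b c"

definition Bf :: "'a::field v3 \<Rightarrow> 'a v3 \<Rightarrow> 'a v3 \<Rightarrow> 'a v3 \<Rightarrow> 'a v3 \<Rightarrow> 'a v3 \<Rightarrow> 'a" where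
  "Bf a c b d u v = det3 u a c * det3 v b d + det3 v a c * det3 u b d
                  + det3 u a d * det3 v b c + det3 v a d * det3 u b c"

definition Lf :: "'a::field v3 \<Rightarrow> 'a v3 \<Rightarrow> 'a v3 \<Rightarrow> 'a v3 \<Rightarrow> 'a v3 \<Rightarrow> 'a v3" where
  "Lf a c b d u = (Bf a c b d u (1,0,0), Bf a c b d u (0,1,0), Bf a c b d u (0,0,1))"

definition GP :: "'a::field v3 \<Rightarrow> 'a v3 \<Rightarrow> 'a v3 \<Rightarrow> 'a v3 \<Rightarrow> bool" where
  "GP a c b d \<longleftrightarrow> det3 a c b \<noteq> 0 \<and> det3 a c d \<noteq> 0 \<and> det3 a b d \<noteq> 0 \<and> det3 c b d \<noteq> 0"

lemma det3_perm: "det3 v u w = - det3 u v w" "det3 u w v = - det3 u v w" "det3 w v u = - det3 u v w"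
  "det3 v w u = det3 u v w" "det3 w u v = det3 u v w"
  by (cases u rule: prod_cases3; cases v rule: prod_cases3; cases w rule: prod_cases3;
      simp add: vdefs algebra_simps)+

lemma det3_zero_vec[simp]: "det3 (0,0,0) v w = 0" "det3 v (0,0,0) w = 0" "det3 v w (0,0,0) = 0"
  by (cases v rule: prod_cases3; cases w rule: prod_cases3; simp add: vdefs)+

lemma GP_nz: "GP a c b d \<Longrightarrow> nz a \<and> nz c \<and> nz b \<and> nz d"
  unfolding GP_def by auto

lemma GP_rot: "GP a c b d \<Longrightarrow> GP c b d a"
  unfolding GP_def using det3_perm by (metis neg_equal_0_iff_equal)

lemma det3_lin1: "det3 (v1,v2,v3) x y = v1 * det3 (1,0,0) x y + v2 * det3 (0,1,0) x y + v3 * det3 (0,0,1) x y"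
  by (cases x rule: prod_cases3; cases y rule: prod_cases3) (simp add: vdefs algebra_simps)

lemma Bf_comm: "Bf a c b d u v = Bf a c b d v u"
  unfolding Bf_def by (simp add: algebra_simps)

lemma Bf_self: "Bf a c b d u u = 2 * Qf a c b d u"
  unfolding Bf_def Qf_def by (simp add: algebra_simps)

lemma det3_comb1: "det3 (comb s x t y) v w = s * det3 x v w + t * det3 y v w"
  by (cases x rule: prod_cases3; cases y rule: prod_cases3; cases v rule: prod_cases3; cases w rule: prod_cases3)
     (simp add: vdefs algebra_simps)

lemma Bf_comb1: "Bf a c b d (comb s x t y) v = s * Bf a c b d x v + t * Bf a c b d y v"
  unfolding Bf_def det3_comb1 by (simp add: algebra_simps)

lemma Qf_comb: "Qf a c b d (comb s x t y) = s^2 * Qf a c b d x + s * t * Bf a c b d x y + t^2 * Qf a c b d y"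
  unfolding Qf_def Bf_def det3_comb1 by (simp add: algebra_simps power2_eq_square)

lemma Lf_comb: "Lf a c b d (comb s x t y) = comb s (Lf a c b d x) t (Lf a c b d y)"
  unfolding Lf_def Bf_comb1 by (simp add: comb_def)

lemma Bf_sc1: "Bf a c b d (sc k u) v = k * Bf a c b d u v"
  unfolding Bf_def by (simp add: sc_simps algebra_simps)

lemma Qf_sc: "Qf a c b d (sc k u) = k^2 * Qf a c b d u"
  unfolding Qf_def by (simp add: sc_simps algebra_simps power2_eq_square)

lemma Lf_sc: "Lf a c b d (sc k u) = sc k (Lf a c b d u)"
  unfolding Lf_def Bf_sc1 by (simp add: sc_def)

lemma Qf_vertex: "Qf a c b d a = 0" "Qf a c b d c = 0" "Qf a c b d b = 0" "Qf a c b d d = 0"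
  unfolding Qf_def by simp_all

lemma comb_10[simp]: "comb 1 l 0 m = l" "comb 0 l 1 m = m"
  by (cases l rule: prod_cases3; cases m rule: prod_cases3; simp add: comb_def)+

lemma two_lines:
  assumes "dot p (cross x y) = 0" "dot p (cross x z) = 0" "det3 x y z \<noteq> 0" "nz p"
  shows "cross p x = (0,0,0)"
proof -
  have "nz (cross (cross x y) (cross x z))" using assms(3) unfolding cross_cross_same
    by (auto simp: sc_zero_iff)
  then obtain k where "p = sc k (cross (cross x y) (cross x z))" using perp2 assms by blast
  then show ?thesis by (simp add: cross_cross_same sc_sc cross_sc_zero)
qed


lemma dot_Lf: "dot v (Lf a c b d u) = Bf a c b d u v"
proof -
  obtain v1 v2 v3 where v: "v = (v1,v2,v3)" by (cases v rule: prod_cases3)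
  show ?thesis unfolding v Lf_def Bf_def dot_def
    by (simp add: det3_lin1[of v1 v2 v3] algebra_simps)
qed

lemma Bf_rot: "Bf c b d a = Bf a c b d"
  unfolding Bf_def by (intro ext) (simp add: det3_perm(2)[of _ b c] det3_perm(2)[of _ a d]
     det3_perm(2)[of _ a c] det3_perm(2)[of _ b d] algebra_simps)

lemma Qf_rot: "Qf c b d a = Qf a c b d"
proof (intro ext)
  fix z
  have "det3 z c b = - det3 z b c" "det3 z d a = - det3 z a d" "det3 z c a = - det3 z a c"
    "det3 z d b = - det3 z b d" by (rule det3_perm(2))+
  then show "Qf c b d a z = Qf a c b d z" unfolding Qf_def by (simp add: algebra_simps)
qed

lemma Lf_rot: "Lf c b d a = Lf a c b d"
  by (intro ext) (simp add: Lf_def Bf_rot)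

lemma vec_eq_dot:
  assumes "\<And>v. dot v x = dot v (y::'a::field v3)"
  shows "x = y"
proof -
  have "dot (1,0,0) x = dot (1,0,0) y" "dot (0,1,0) x = dot (0,1,0) y" "dot (0,0,1) x = dot (0,0,1) y"
    using assms by blast+
  then show ?thesis by (cases x rule: prod_cases3; cases y rule: prod_cases3) (simp add: dot_def)
qed

lemma dot_comb2: "dot v (comb s x t y) = s * dot v x + t * dot v y"
  by (cases v rule: prod_cases3; cases x rule: prod_cases3; cases y rule: prod_cases3)
     (simp add: vdefs algebra_simps)

lemma Bf_vertex: "Bf a c b d a c = - det3 a c d * det3 a b c"
  "Bf a c b d a b = - 2 * det3 a b c * det3 a b d"
  "Bf a c b d a d = det3 a c d * det3 a b d"
proof -
  have "Bf a c b d a c = det3 c a d * det3 a b c" by (simp add: Bf_def)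
  also have "det3 c a d = - det3 a c d" by (rule det3_perm(1))
  finally show "Bf a c b d a c = - det3 a c d * det3 a b c" by simp
  have "Bf a c b d a b = det3 b a c * det3 a b d + det3 b a d * det3 a b c" by (simp add: Bf_def)
  also have "det3 b a c = - det3 a b c" by (rule det3_perm(1))
  also have "det3 b a d = - det3 a b d" by (rule det3_perm(1))
  finally show "Bf a c b d a b = - 2 * det3 a b c * det3 a b d" by (simp add: algebra_simps)
  have "Bf a c b d a d = det3 d a c * det3 a b d" by (simp add: Bf_def)
  also have "det3 d a c = det3 a c d" by (rule det3_perm(5))
  finally show "Bf a c b d a d = det3 a c d * det3 a b d" .
qed

lemma Lf_vertex: "Lf a c b d a = comb (det3 a b d) (cross a c) (det3 a b c) (cross a d)"
proof (rule vec_eq_dot)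
  fix v
  show "dot v (Lf a c b d a) = dot v (comb (det3 a b d) (cross a c) (det3 a b c) (cross a d))"
    unfolding dot_Lf dot_comb2 by (simp add: Bf_def det3_def algebra_simps)
qed


lemma comb_0: "comb 0 a t b = sc t b" "comb s a 0 b = sc s a"
  by (cases a rule: prod_cases3; cases b rule: prod_cases3; simp add: vdefs)+

lemma dot_zero[simp]: "dot (0,0,0) v = 0" "dot v (0,0,0) = 0"
  by (cases v rule: prod_cases3; simp add: dot_def)+

lemma GP_cross: "GP a c b d \<Longrightarrow> nz (cross a b)"
  unfolding GP_def by (auto simp: det3_cross)

lemma cramer_zero:
  assumes "det3 u b c = 0" "det3 a u c = 0" "det3 a b u = 0" "det3 a b c \<noteq> 0"
  shows "u = (0,0,0)"
proof -
  obtain u1 u2 u3 where u: "u = (u1,u2,u3)" by (cases u rule: prod_cases3)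
  obtain a1 a2 a3 where a: "a = (a1,a2,a3)" by (cases a rule: prod_cases3)
  obtain b1 b2 b3 where b: "b = (b1,b2,b3)" by (cases b rule: prod_cases3)
  obtain c1 c2 c3 where c: "c = (c1,c2,c3)" by (cases c rule: prod_cases3)
  have "det3 a b c * u1 = det3 u b c * a1 + det3 a u c * b1 + det3 a b u * c1"
       "det3 a b c * u2 = det3 u b c * a2 + det3 a u c * b2 + det3 a b u * c2"
       "det3 a b c * u3 = det3 u b c * a3 + det3 a u c * b3 + det3 a b u * c3"
    unfolding u a b c by (simp_all add: vdefs algebra_simps)
  then show ?thesis using assms u by simp
qed

lemma kernel_ids:
  "Bf a c b d u a = - (2 * det3 a u c * det3 a b d + det3 a b u * det3 a c d)"
  "Bf a c b d u b = - 2 * det3 u b c * det3 a b d + det3 a b u * det3 b c d"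
  "Bf a c b d u c = det3 a u c * det3 b c d - det3 u b c * det3 a c d"
  by (cases a rule: prod_cases3; cases b rule: prod_cases3; cases c rule: prod_cases3;
      cases d rule: prod_cases3; cases u rule: prod_cases3; simp add: vdefs Bf_def algebra_simps)+

lemma Lf_kernel:
  fixes a c b d u :: "'a::field v3"
  assumes gp: "GP a c b d" and two: "(2::'a::field) \<noteq> 0" and z: "Lf a c b d u = (0,0,0)"
  shows "u = (0,0,0)"
proof -
  have e: "Bf a c b d u v = 0" for v using z dot_Lf[of v a c b d u] by (simp add: dot_def)
  define x where "x = det3 u b c"
  define y where "y = det3 a u c"
  define w where "w = det3 a b u"
  define K1 where "K1 = det3 a b d"
  define K2 where "K2 = det3 a c d"
  define K3 where "K3 = det3 b c d"
  have K: "K1 \<noteq> 0" "K2 \<noteq> 0" "K3 \<noteq> 0" using gp unfolding GP_def K1_def K2_def K3_def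
    by (metis det3_perm neg_equal_0_iff_equal)+
  have e1: "2 * y * K1 + w * K2 = 0" using e[of a] kernel_ids(1)[of a c b d u]
    unfolding x_def y_def w_def K1_def K2_def by (metis neg_equal_0_iff_equal)
  have e2: "- 2 * x * K1 + w * K3 = 0" using e[of b] kernel_ids(2)[of a c b d u]
    unfolding x_def y_def w_def K1_def K3_def by simp
  have e3: "y * K3 - x * K2 = 0" using e[of c] kernel_ids(3)[of a c b d u]
    unfolding x_def y_def w_def K2_def K3_def by simp
  have w: "w = 2 * x * K1 / K3" using e2 K by (simp add: field_simps)
  have y: "y = x * K2 / K3" using e3 K by (simp add: field_simps)
  have "2 * (x * K2 / K3) * K1 + 2 * x * K1 / K3 * K2 = 0" using e1 unfolding w y .
  then have "2 * (2 * (x * K1 * K2)) = 0" using K by (simp add: field_simps)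
  moreover have "(4::'a) = 2 * 2" by simp
  ultimately have x0: "x = 0" using two K by (metis mult_eq_0_iff)
  then have "y = 0" "w = 0" using w y by simp_all
  moreover have "det3 a b c \<noteq> 0" using gp unfolding GP_def by (metis det3_perm neg_equal_0_iff_equal)
  ultimately show ?thesis using cramer_zero x0 unfolding x_def y_def w_def by blast
qed

lemma Lf_nz: "GP (a::'a::field v3) c b d \<Longrightarrow> (2::'a::field) \<noteq> 0 \<Longrightarrow> nz u \<Longrightarrow> nz (Lf a c b d u)"
  using Lf_kernel by blast

definition polmap :: "'a::field v3 \<Rightarrow> 'a v3 \<Rightarrow> 'a v3 \<Rightarrow> 'a v3 \<Rightarrow> 'a point \<Rightarrow> 'a line" where
  "polmap a c b d P = abs_line (Lf a c b d (rep_point P))"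

context
  fixes a c b d :: "'a::field v3"
  assumes gp: "GP a c b d" and two: "(2::'a) \<noteq> 0"
begin

lemma pol_Pt: "nz u \<Longrightarrow> polmap a c b d (abs_point u) = abs_line (Lf a c b d u)"
proof -
  assume u: "nz u"
  obtain k where k: "k \<noteq> 0" "rep_point (abs_point u) = sc k u" using rep_abs_point u by blast
  show ?thesis unfolding polmap_def k Lf_sc using Ln_sc k(1) Lf_nz[OF gp two u] by blast
qed

lemma inc_pol: "nz u \<Longrightarrow> nz x \<Longrightarrow> inc (abs_point x) (polmap a c b d (abs_point u)) \<longleftrightarrow> Bf a c b d u x = 0"
  by (simp add: pol_Pt inc_iff Lf_nz[OF gp two] dot_Lf)

lemma pol_inj_vec:
  assumes u: "nz u" and v: "nz v" and e: "polmap a c b d (abs_point u) = polmap a c b d (abs_point v)"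
  shows "abs_point u = abs_point v"
proof -
  have "cross (Lf a c b d u) (Lf a c b d v) = (0,0,0)"
    using e u v by (simp add: pol_Pt Ln_eq_iff Lf_nz[OF gp two])
  then obtain k where k: "Lf a c b d u = sc k (Lf a c b d v)" using cross_zero_par Lf_nz[OF gp two v] by blast
  have "Lf a c b d (comb 1 u (-k) v) = (0,0,0)" unfolding Lf_comb k
    by (cases "Lf a c b d v" rule: prod_cases3) (simp add: vdefs)
  then have "comb 1 u (-k) v = (0,0,0)" using Lf_kernel[OF gp two] by blast
  then have "u = sc k v" by (cases u rule: prod_cases3; cases v rule: prod_cases3) (simp add: vdefs)
  then show ?thesis using u v by (simp add: Pt_eq_iff cross_sc_zero)
qed

lemma pol_inj: "inj (polmap a c b d)"
proof (rule injI)
  fix P Q assume e: "polmap a c b d P = polmap a c b d Q"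
  obtain u where u: "nz u" "P = abs_point u" using point_ex by blast
  obtain v where v: "nz v" "Q = abs_point v" using point_ex by blast
  show "P = Q" using pol_inj_vec[OF u(1) v(1)] e u v by simp
qed

lemma two_pts:
  assumes "nz w"
  shows "\<exists>p q. nz p \<and> nz q \<and> nz (cross p q) \<and> dot p w = 0 \<and> dot q w = 0"
proof -
  obtain w1 w2 w3 where w: "w = (w1,w2,w3)" by (cases w rule: prod_cases3)
  show ?thesis
  proof (cases "w1 = 0")
    case False
    show ?thesis
      apply (rule exI[of _ "(w2, -w1, 0)"], rule exI[of _ "(w3, 0, -w1)"])
      using False by (simp add: w vdefs algebra_simps)
  next
    case w1: True
    show ?thesis
    proof (cases "w2 = 0")
      case False
      show ?thesis
        apply (rule exI[of _ "(1, 0, 0)"], rule exI[of _ "(0, w3, -w2)"])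
        using False w1 by (simp add: w vdefs algebra_simps)
    next
      case True
      show ?thesis
        apply (rule exI[of _ "(1, 0, 0)"], rule exI[of _ "(0, 1, 0)"])
        using True w1 by (simp add: w vdefs algebra_simps)
    qed
  qed
qed

lemma pol_surj_vec:
  assumes w: "nz w"
  shows "\<exists>r. nz r \<and> polmap a c b d (abs_point r) = abs_line w"
proof -
  obtain p q where pq: "nz p" "nz q" "nz (cross p q)" "dot p w = 0" "dot q w = 0"
    using two_pts w by blast
  have "abs_point p \<noteq> abs_point q" using pq by (simp add: Pt_eq_iff)
  then have "polmap a c b d (abs_point p) \<noteq> polmap a c b d (abs_point q)" using pol_inj
    by (meson injD)
  then have r: "nz (cross (Lf a c b d p) (Lf a c b d q))"
    using pq by (simp add: pol_Pt Ln_eq_iff Lf_nz[OF gp two])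
  define r where "r = cross (Lf a c b d p) (Lf a c b d q)"
  have "dot p (Lf a c b d r) = dot r (Lf a c b d p)" "dot q (Lf a c b d r) = dot r (Lf a c b d q)"
    by (simp_all add: dot_Lf Bf_comm)
  moreover have "dot r (Lf a c b d p) = 0" "dot r (Lf a c b d q) = 0" unfolding r_def by simp_all
  ultimately have "dot p (Lf a c b d r) = 0" "dot q (Lf a c b d r) = 0" by simp_all
  then have "join (abs_point p) (abs_point q) = abs_line (Lf a c b d r)"
    using join_unique[OF Lf_nz[OF gp two] pq(1,2,3)] r unfolding r_def
    by (simp add: dot_comm)
  moreover have "join (abs_point p) (abs_point q) = abs_line w"
    using join_unique[OF w pq(1,2,3)] pq by (simp add: dot_comm)
  ultimately show ?thesis using r unfolding r_def by (metis pol_Pt)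
qed

lemma Lf_surj:
  assumes w: "nz w"
  shows "\<exists>r. Lf a c b d r = w"
proof -
  obtain r where r: "nz r" "polmap a c b d (abs_point r) = abs_line w" using pol_surj_vec w by blast
  then have "cross (Lf a c b d r) w = (0,0,0)" using w by (simp add: pol_Pt Ln_eq_iff Lf_nz[OF gp two])
  then obtain k where k: "Lf a c b d r = sc k w" using cross_zero_par w by blast
  then have "k \<noteq> 0" using Lf_nz[OF gp two r(1)] by (auto simp: sc_zero_iff)
  then have "Lf a c b d (sc (1/k) r) = w" by (simp add: Lf_sc k sc_sc sc_1)
  then show ?thesis by blast
qed

lemma pol_polarity: "polarity (polmap a c b d)"
  unfolding polarity_def
proof
  show "bij (polmap a c b d)"
  proof (rule bijI[OF pol_inj])
    show "surj (polmap a c b d)"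
    proof (rule surjI)
      fix l :: "'a line"
      obtain w where w: "nz w" "l = abs_line w" using line_ex by blast
      show "polmap a c b d (SOME P. polmap a c b d P = l) = l"
        by (rule someI_ex) (use pol_surj_vec[OF w(1)] w(2) in blast)
    qed
  qed
  show "\<forall>P Q. inc P (polmap a c b d Q) = inc Q (polmap a c b d P)"
  proof (intro allI)
    fix P Q :: "'a point"
    obtain u where u: "nz u" "P = abs_point u" using point_ex by blast
    obtain v where v: "nz v" "Q = abs_point v" using point_ex by blast
    show "inc P (polmap a c b d Q) = inc Q (polmap a c b d P)"
      unfolding u(2) v(2) using inc_pol u(1) v(1) Bf_comm by metis
  qed
qed

end


lemma comb_00[simp]: "comb 0 x 0 y = (0,0,0)"
  by (cases x rule: prod_cases3; cases y rule: prod_cases3; simp add: comb_def)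

lemma Jc: "comb (det3 c b p) (cross p a) (det3 a c p) (cross p b) = sc (det3 a b p) (cross p c)"
  by (cases a rule: prod_cases3; cases b rule: prod_cases3; cases c rule: prod_cases3; cases p rule: prod_cases3)
     (simp add: vdefs algebra_simps)

lemma dp12: fixes u v w :: "'a::field v3" shows "det3 v u w = - det3 u v w"
  by (rule det3_perm(1))
lemma dp23: fixes u v w :: "'a::field v3" shows "det3 u w v = - det3 u v w"
  by (rule det3_perm(2))
lemma dp13: fixes u v w :: "'a::field v3" shows "det3 w v u = - det3 u v w"
  by (rule det3_perm(3))
lemma dpr1: fixes u v w :: "'a::field v3" shows "det3 v w u = det3 u v w"
  by (rule det3_perm(4))
lemma dpr2: fixes u v w :: "'a::field v3" shows "det3 w u v = det3 u v w"
  by (rule det3_perm(5))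

context
  fixes a c b d :: "'a::field v3"
  assumes gp: "GP a c b d" and two: "(2::'a) \<noteq> 0"
begin

lemma nzs: "nz a" "nz b" "nz c" "nz d" using GP_nz[OF gp] by auto

lemma Ks: "det3 a c b \<noteq> 0" "det3 a c d \<noteq> 0" "det3 a b d \<noteq> 0" "det3 c b d \<noteq> 0"
  "det3 a b c \<noteq> 0" "det3 b c d \<noteq> 0"
  using gp unfolding GP_def by (auto simp: det3_perm(2)[of a b c] det3_perm(1)[of b c d])

lemma line_AB_conic:
  assumes w: "nz w" and l: "det3 w a b = 0" and q: "Qf a c b d w = 0"
  shows "cross w a = (0,0,0) \<or> cross w b = (0,0,0)"
proof -
  obtain s t where st: "w = comb s a t b" using span2[OF l GP_cross[OF gp]] by blast
  have "Qf a c b d w = s * t * (- 2 * det3 a b c * det3 a b d)"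
    unfolding st Qf_comb Qf_vertex Bf_vertex by simp
  then have "s * t = 0" using q Ks two by simp
  then have "s = 0 \<or> t = 0" by simp
  then show ?thesis
  proof
    assume "s = 0" then have "w = sc t b" using st comb_0 by simp
    then show ?thesis by (simp add: cross_sc_zero)
  next
    assume "t = 0" then have "w = sc s a" using st comb_0 by simp
    then show ?thesis by (simp add: cross_sc_zero)
  qed
qed

lemma vA: "nz p \<Longrightarrow> det3 p a c = 0 \<Longrightarrow> det3 p a d = 0 \<Longrightarrow> cross p a = (0,0,0)"
  using two_lines[of p a c d] Ks by (simp add: det3_def)

lemma vC: "nz p \<Longrightarrow> det3 p a c = 0 \<Longrightarrow> det3 p b c = 0 \<Longrightarrow> cross p c = (0,0,0)"
proof -
  assume h: "nz p" "det3 p a c = 0" "det3 p b c = 0"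
  have "det3 p c a = 0" "det3 p c b = 0" using h det3_perm(2) by (metis neg_equal_0_iff_equal)+
  moreover have "det3 c a b \<noteq> 0" using Ks dpr2[where u=a and v=b and w=c] by metis
  ultimately show ?thesis using two_lines[of p c a b] h by (simp add: det3_def)
qed

lemma vB: "nz p \<Longrightarrow> det3 p b d = 0 \<Longrightarrow> det3 p b c = 0 \<Longrightarrow> cross p b = (0,0,0)"
proof -
  assume h: "nz p" "det3 p b d = 0" "det3 p b c = 0"
  moreover have "det3 b d c \<noteq> 0" using Ks dpr1[where u=c and v=b and w=d] by metis
  ultimately show ?thesis using two_lines[of p b d c] h by (simp add: det3_def)
qed

lemma vD: "nz p \<Longrightarrow> det3 p b d = 0 \<Longrightarrow> det3 p a d = 0 \<Longrightarrow> cross p d = (0,0,0)"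
proof -
  assume h: "nz p" "det3 p b d = 0" "det3 p a d = 0"
  have "det3 p d b = 0" "det3 p d a = 0" using h det3_perm(2) by (metis neg_equal_0_iff_equal)+
  moreover have "det3 d b a \<noteq> 0" using Ks dp13[where u=a and v=b and w=d] by (metis neg_equal_0_iff_equal)
  ultimately show ?thesis using two_lines[of p d b a] h by (simp add: det3_def)
qed

lemma curve_iff:
  assumes p: "nz p"
  shows "abs_point p \<in> harmonic_curve (abs_point a) (abs_point c) (abs_point b) (abs_point d)
         \<longleftrightarrow> Qf a c b d p = 0"
proof (cases "abs_point p \<in> {abs_point a, abs_point c, abs_point b, abs_point d}")
  case True
  then have "\<exists>v\<in>{a,c,b,d}. cross p v = (0,0,0)" using Pt_eq_iff[OF p] nzs by auto
  then obtain v where v: "v \<in> {a,c,b,d}" "cross p v = (0,0,0)" by blast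
  then have "nz v" using nzs by auto
  then obtain k where "p = sc k v" using cross_zero_par v by blast
  then have "Qf a c b d p = 0" using v(1) by (auto simp: Qf_sc Qf_vertex)
  then show ?thesis using True unfolding harmonic_curve_def by auto
next
  case False
  have mem: "abs_point p \<in> harmonic_curve (abs_point a) (abs_point c) (abs_point b) (abs_point d)
     \<longleftrightarrow> harmonic_pencil (join (abs_point p) (abs_point a)) (join (abs_point p) (abs_point b))
            (join (abs_point p) (abs_point c)) (join (abs_point p) (abs_point d))"
    using False unfolding harmonic_curve_def by auto
  have nzc: "nz (cross p a)" "nz (cross p b)" "nz (cross p c)" "nz (cross p d)"
    using False Pt_eq_iff[OF p] nzs by auto
  have joins: "join (abs_point p) (abs_point a) = abs_line (cross p a)"
    "join (abs_point p) (abs_point b) = abs_line (cross p b)"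
    "join (abs_point p) (abs_point c) = abs_line (cross p c)"
    "join (abs_point p) (abs_point d) = abs_line (cross p d)"
    using join_eq[OF p] nzs nzc by auto
  define X1 where "X1 = det3 p a c"
  define X2 where "X2 = det3 p b d"
  define X3 where "X3 = det3 p a d"
  define X4 where "X4 = det3 p b c"
  have Q: "Qf a c b d p = X1 * X2 + X3 * X4" unfolding Qf_def X1_def X2_def X3_def X4_def ..
  show ?thesis
  proof (cases "det3 p a b = 0")
    case True
    have "Qf a c b d p \<noteq> 0" using line_AB_conic[OF p True] nzc by auto
    moreover have "join (abs_point p) (abs_point b) = abs_line (cross p a)"
      using join_unique[OF nzc(1) p nzs(2) nzc(2)] True by (simp add: det3_cross)
    then have "join (abs_point p) (abs_point a) = join (abs_point p) (abs_point b)"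
      using joins by simp
    then have "\<not> harmonic_pencil (join (abs_point p) (abs_point a)) (join (abs_point p) (abs_point b))
            (join (abs_point p) (abs_point c)) (join (abs_point p) (abs_point d))"
      unfolding harmonic_pencil_def by simp
    ultimately show ?thesis using mem by simp
  next
    case ne: False
    define l where "l = cross p a"
    define m where "m = cross p b"
    have lm: "nz (cross l m)" unfolding l_def m_def cross_cross_same using ne p by (simp add: sc_zero_iff)
    define k where "k = det3 a b p"
    have k: "k \<noteq> 0" using ne dpr2[where u=a and v=b and w=p] unfolding k_def by metis
    have s1: "det3 c b p = - X4" unfolding X4_def using dpr2[where u=c and v=b and w=p] dp23[where u=p and v=b and w=c] by metis
    have s2: "det3 a c p = X1" unfolding X1_def using dpr2[where u=a and v=c and w=p] by metis
    have s3: "det3 d b p = - X2" unfolding X2_def using dpr2[where u=d and v=b and w=p] dp23[where u=p and v=b and w=d] by metis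
    have s4: "det3 a d p = X3" unfolding X3_def using dpr2[where u=a and v=d and w=p] by metis
    have JC: "comb (- X4) l X1 m = sc k (cross p c)" using Jc[of c b p a] s1 s2 unfolding l_def m_def k_def by simp
    have JD: "comb (- X2) l X3 m = sc k (cross p d)" using Jc[of d b p a] s3 s4 unfolding l_def m_def k_def by simp
    have nC: "(- X4, X1) \<noteq> (0,0)"
    proof
      assume "(- X4, X1) = (0,0)"
      then have "sc k (cross p c) = (0,0,0)" using JC by simp
      then show False using k nzc by (simp add: sc_zero_iff)
    qed
    have nD: "(- X2, X3) \<noteq> (0,0)"
    proof
      assume "(- X2, X3) = (0,0)"
      then have "sc k (cross p d) = (0,0,0)" using JD by simp
      then show False using k nzc by (simp add: sc_zero_iff)
    qed
    have n10: "(1::'a, 0::'a) \<noteq> (0,0)" and n01: "(0::'a, 1::'a) \<noteq> (0,0)" by simp_all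
    have LC: "join (abs_point p) (abs_point c) = abs_line (comb (- X4) l X1 m)"
      unfolding JC using joins(3) Ln_sc[OF k nzc(3)] by simp
    have LD: "join (abs_point p) (abs_point d) = abs_line (comb (- X2) l X3 m)"
      unfolding JD using joins(4) Ln_sc[OF k nzc(4)] by simp
    have LA: "join (abs_point p) (abs_point a) = abs_line (comb 1 l 0 m)" using joins l_def by simp
    have LB: "join (abs_point p) (abs_point b) = abs_line (comb 0 l 1 m)" using joins m_def by simp
    have H: "harmonic_pencil (join (abs_point p) (abs_point a)) (join (abs_point p) (abs_point b))
            (join (abs_point p) (abs_point c)) (join (abs_point p) (abs_point d)) \<longleftrightarrow>
          (X1 \<noteq> 0 \<and> X3 \<noteq> 0 \<and> X4 \<noteq> 0 \<and> X2 \<noteq> 0 \<and> X1 * X2 - X4 * X3 \<noteq> 0) \<and> X1 * X2 + X3 * X4 = 0"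
      using span_pencil[OF lm n10 n01 nC nD]
      unfolding LA LB LC LD by (simp add: fd_def algebra_simps)
    show ?thesis
    proof
      assume "abs_point p \<in> harmonic_curve (abs_point a) (abs_point c) (abs_point b) (abs_point d)"
      then show "Qf a c b d p = 0" using mem H Q by simp
    next
      assume q: "Qf a c b d p = 0"
      then have e: "X1 * X2 = - (X3 * X4)" using Q by (simp add: eq_neg_iff_add_eq_0)
      have "X1 \<noteq> 0"
      proof
        assume "X1 = 0"
        then have "X3 = 0 \<or> X4 = 0" using e by simp
        then show False using vA[OF p] vC[OF p] nzc \<open>X1 = 0\<close> unfolding X1_def X3_def X4_def by auto
      qed
      moreover have "X2 \<noteq> 0"
      proof
        assume "X2 = 0"
        then have "X3 = 0 \<or> X4 = 0" using e by simp
        then show False using vB[OF p] vD[OF p] nzc \<open>X2 = 0\<close> unfolding X2_def X3_def X4_def by auto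
      qed
      moreover have "X3 \<noteq> 0"
      proof
        assume "X3 = 0"
        then have "X1 = 0 \<or> X2 = 0" using e by simp
        then show False using vA[OF p] vD[OF p] nzc \<open>X3 = 0\<close> unfolding X1_def X2_def X3_def by auto
      qed
      moreover have "X4 \<noteq> 0"
      proof
        assume "X4 = 0"
        then have "X1 = 0 \<or> X2 = 0" using e by simp
        then show False using vC[OF p] vB[OF p] nzc \<open>X4 = 0\<close> unfolding X1_def X2_def X4_def by auto
      qed
      moreover have "X1 * X2 - X4 * X3 \<noteq> 0"
      proof -
        have h: "X1 * X2 - X4 * X3 = - 2 * (X3 * X4)" using e by (simp add: algebra_simps)
        have "- 2 * (X3 * X4) \<noteq> 0" using two \<open>X3 \<noteq> 0\<close> \<open>X4 \<noteq> 0\<close> by simp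
        with h show ?thesis by metis
      qed
      ultimately show "abs_point p \<in> harmonic_curve (abs_point a) (abs_point c) (abs_point b) (abs_point d)"
        unfolding mem H using Q q by auto
    qed
  qed
qed

end


lemma comb_sc_same: "comb s (sc k p) t p = sc (s * k + t) p"
  by (cases p rule: prod_cases3) (simp add: vdefs algebra_simps)

lemma comb_comb: "comb s (comb s' x t' p) t p = comb (s * s') x (s * t' + t) p"
  by (cases p rule: prod_cases3; cases x rule: prod_cases3) (simp add: vdefs algebra_simps)

lemma comb_sc0: "comb s x 0 p = sc s x"
  by (cases p rule: prod_cases3; cases x rule: prod_cases3) (simp add: vdefs algebra_simps)

lemma Bf_comb2: "Bf a c b d v (comb s x t y) = s * Bf a c b d v x + t * Bf a c b d v y"
  using Bf_comb1 Bf_comm by metis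

context
  fixes a c b d :: "'a::field v3"
  assumes gp: "GP a c b d" and two: "(2::'a) \<noteq> 0"
begin

lemma point_on_line_comb:
  assumes y: "nz y" and xp: "nz (cross x p)" and px: "nz p" "nz x"
    and col: "collinear {abs_point p, M, abs_point x, abs_point y}"
  shows "\<exists>s t. y = comb s x t p \<and> (s, t) \<noteq> (0,0)"
proof -
  obtain l where l: "inc (abs_point p) l" "inc (abs_point x) l" "inc (abs_point y) l"
    using col unfolding collinear_def by auto
  obtain w where w: "nz w" "l = abs_line w" using line_ex by blast
  have "dot w x = 0" "dot w p = 0" using l w px by (auto simp: inc_iff dot_comm)
  then obtain k where k: "w = sc k (cross x p)" using perp2 xp by blast
  have "k \<noteq> 0" using k w by (auto simp: sc_zero_iff)
  have "dot y w = 0" using l w y by (simp add: inc_iff)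
  then have "det3 y x p = 0" using k \<open>k \<noteq> 0\<close> by (simp add: sc_simps det3_def)
  then obtain s t where st: "y = comb s x t p" using span2 xp by blast
  moreover have "(s, t) \<noteq> (0,0)" using st y by auto
  ultimately show ?thesis by blast
qed

lemma reflection:
  assumes p: "nz p" and q: "Qf a c b d p \<noteq> 0"
  shows "harmonic_reflection (abs_point p) (polmap a c b d (abs_point p)) `
           harmonic_curve (abs_point a) (abs_point c) (abs_point b) (abs_point d)
         = harmonic_curve (abs_point a) (abs_point c) (abs_point b) (abs_point d)"
proof -
  let ?P = "abs_point p"
  let ?f = "harmonic_reflection ?P (polmap a c b d ?P)"
  let ?C = "harmonic_curve (abs_point a) (abs_point c) (abs_point b) (abs_point d)"
  define Bpp where "Bpp = Bf a c b d p p"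
  have Bpp: "Bpp \<noteq> 0" using q two unfolding Bpp_def Bf_self by simp
  define H where "H x = comb Bpp x (- 2 * Bf a c b d x p) p" for x
  have Hgood: "nz (H x) \<and> ?f (abs_point x) = abs_point (H x)" if x: "nz x" for x
  proof (cases "cross x p = (0,0,0)")
    case True
    then obtain k where k: "x = sc k p" using cross_zero_par p by blast
    then have k0: "k \<noteq> 0" using x by (auto simp: sc_zero_iff)
    have Hx: "H x = sc (- k * Bpp) p"
      unfolding H_def k comb_sc_same Bf_sc1 Bpp_def by (simp add: algebra_simps)
    have nH: "nz (H x)" unfolding Hx using k0 Bpp p by (simp add: sc_zero_iff)
    have "abs_point x = ?P" unfolding k using Pt_sc k0 p by blast
    moreover have "abs_point (H x) = ?P" unfolding Hx using Pt_sc[of "- k * Bpp" p] k0 Bpp p by simp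
    ultimately show ?thesis using nH unfolding harmonic_reflection_def by simp
  next
    case xp: False
    have neq: "abs_point x \<noteq> ?P" using xp x p by (simp add: Pt_eq_iff)
    show ?thesis
    proof (cases "Bf a c b d p x = 0")
      case True
      have Hx: "H x = sc Bpp x" unfolding H_def using True Bf_comm[of a c b d x p]
        by (simp add: comb_sc0)
      have "inc (abs_point x) (polmap a c b d ?P)" using inc_pol[OF gp two p x] True by simp
      then show ?thesis unfolding harmonic_reflection_def Hx using Pt_sc[OF Bpp x] Bpp x
        by (simp add: sc_zero_iff)
    next
      case False
      define Bxp where "Bxp = Bf a c b d x p"
      have Bxp: "Bxp \<noteq> 0" using False Bf_comm unfolding Bxp_def by metis
      have ninc: "\<not> inc (abs_point x) (polmap a c b d ?P)" using inc_pol[OF gp two p x] False by simp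
      have Lp: "nz (Lf a c b d p)" using Lf_nz[OF gp two p] .
      have pol: "polmap a c b d ?P = abs_line (Lf a c b d p)" using pol_Pt[OF gp two p] .
      have jn: "join (abs_point x) ?P = abs_line (cross x p)" using join_eq[OF x p] xp by simp
      define mm where "mm = comb Bpp x (- Bxp) p"
      have nmm: "nz mm" unfolding mm_def using comb_nz[OF xp] Bpp by simp
      have dl: "nz (cross (cross x p) (Lf a c b d p))"
      proof
        assume "cross (cross x p) (Lf a c b d p) = (0,0,0)"
        then obtain k where "cross x p = sc k (Lf a c b d p)" using cross_zero_par Lp by blast
        then have "dot p (cross x p) = k * Bf a c b d p p" by (simp add: sc_simps dot_Lf)
        then have "k * Bpp = 0" unfolding Bpp_def by simp
        then have "k = 0" using Bpp by simp
        then show False using \<open>cross x p = sc k (Lf a c b d p)\<close> xp by (simp add: sc_zero_iff)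
      qed
      have "dot mm (Lf a c b d p) = 0" unfolding mm_def dot_Lf Bf_comb2 Bpp_def Bxp_def
        using Bf_comm[of a c b d p x] by (simp add: algebra_simps)
      then have M: "meet (join (abs_point x) ?P) (polmap a c b d ?P) = abs_point mm"
        unfolding jn pol using meet_unique[OF nmm _ Lp dl] xp unfolding mm_def
        by (simp add: dot_comb_cross)
      have f: "?f (abs_point x) = harm_conj ?P (abs_point mm) (abs_point x)"
        unfolding harmonic_reflection_def M using neq ninc by simp
      have n1: "(0::'a, 1::'a) \<noteq> (0,0)" and n3: "(1::'a, 0::'a) \<noteq> (0,0)" by simp_all
      have n2: "(Bpp, - Bxp) \<noteq> (0,0)" and n4: "(Bpp, - 2 * Bxp) \<noteq> (0,0)" using Bpp by simp_all
      have Pc: "?P = abs_point (comb 0 x 1 p)" by simp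
      have Xc: "abs_point x = abs_point (comb 1 x 0 p)" by simp
      have Hc: "H x = comb Bpp x (- 2 * Bxp) p" unfolding H_def Bxp_def ..
      have harm: "harmonic ?P (abs_point mm) (abs_point x) (abs_point (H x))"
        unfolding Pc Xc Hc mm_def span_harmonic[OF xp n1 n2 n3 n4]
        using Bpp Bxp two by (simp add: fd_def algebra_simps)
      have "harm_conj ?P (abs_point mm) (abs_point x) = abs_point (H x)"
        unfolding harm_conj_def
      proof (rule the_equality)
        show "harmonic ?P (abs_point mm) (abs_point x) (abs_point (H x))" by (rule harm)
      next
        fix Y assume Y: "harmonic ?P (abs_point mm) (abs_point x) Y"
        obtain y where y: "nz y" "Y = abs_point y" using point_ex by blast
        obtain s t where st: "y = comb s x t p" "(s, t) \<noteq> (0,0)"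
          using point_on_line_comb[OF y(1) xp p x] Y y unfolding harmonic_def by blast
        have "harmonic (abs_point (comb 0 x 1 p)) (abs_point (comb Bpp x (- Bxp) p))
            (abs_point (comb 1 x 0 p)) (abs_point (comb s x t p))"
          using Y y st unfolding mm_def by simp
        then have c1: "fd 0 1 1 0 * fd Bpp (- Bxp) s t + fd 0 1 s t * fd Bpp (- Bxp) 1 0 = 0"
          using span_harmonic[OF xp n1 n2 n3 st(2)] by blast
        have c2: "fd 0 1 1 0 * fd Bpp (- Bxp) Bpp (- 2 * Bxp) + fd 0 1 Bpp (- 2 * Bxp) * fd Bpp (- Bxp) 1 0 = 0"
          using harm unfolding Pc Xc Hc mm_def span_harmonic[OF xp n1 n2 n3 n4] by blast
        have "fd s t Bpp (- 2 * Bxp) = 0"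
          using fourth_unique[of 0 1 Bpp "- Bxp" 1 0 s t Bpp "- 2 * Bxp"] c1 c2 Bpp
          by (simp add: fd_def)
        then have "abs_point (comb s x t p) = abs_point (comb Bpp x (- 2 * Bxp) p)"
          using comb_Pt_eq_iff[OF xp st(2) n4] by simp
        then show "Y = abs_point (H x)" using y st Hc by simp
      qed
      then show ?thesis using f Hc comb_nz[OF xp n4] by simp
    qed
  qed
  have QH: "Qf a c b d (H x) = Bpp^2 * Qf a c b d x" for x
  proof -
    have "Bpp = 2 * Qf a c b d p" unfolding Bpp_def Bf_self ..
    then show ?thesis unfolding H_def Qf_comb by (simp add: algebra_simps power2_eq_square)
  qed
  have HH: "H (H x) = sc (Bpp^2) x" for x
  proof -
    have "Bf a c b d (H x) p = - Bpp * Bf a c b d x p"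
      unfolding H_def Bf_comb1 Bpp_def by (simp add: algebra_simps)
    then have "H (H x) = comb (Bpp * Bpp) x (Bpp * (- 2 * Bf a c b d x p) + 2 * Bpp * Bf a c b d x p) p"
      unfolding H_def[of "H x"] by (simp add: H_def comb_comb)
    then show ?thesis by (simp add: comb_sc0 power2_eq_square)
  qed
  show ?thesis
  proof
    show "?f ` ?C \<subseteq> ?C"
    proof
      fix Z assume "Z \<in> ?f ` ?C"
      then obtain X where X: "X \<in> ?C" "Z = ?f X" by blast
      obtain x where x: "nz x" "X = abs_point x" using point_ex by blast
      have "Qf a c b d x = 0" using X x curve_iff[OF gp two x(1)] by simp
      then have "Qf a c b d (H x) = 0" using QH by simp
      then show "Z \<in> ?C" using X x Hgood[OF x(1)] curve_iff[OF gp two] by simp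
    qed
  next
    show "?C \<subseteq> ?f ` ?C"
    proof
      fix Z assume Z: "Z \<in> ?C"
      obtain z where z: "nz z" "Z = abs_point z" using point_ex by blast
      have qz: "Qf a c b d z = 0" using Z z curve_iff[OF gp two z(1)] by simp
      have nH: "nz (H z)" using Hgood[OF z(1)] by simp
      have "abs_point (H z) \<in> ?C" using qz QH curve_iff[OF gp two nH] by simp
      moreover have "?f (abs_point (H z)) = Z"
        using Hgood[OF nH] HH z Pt_sc[of "Bpp * Bpp" z] Bpp by (simp add: power2_eq_square)
      ultimately show "Z \<in> ?f ` ?C" by (metis image_eqI)
    qed
  qed
qed

end


lemma Bf_sc2: "Bf a c b d u (sc k v) = k * Bf a c b d u v"
  using Bf_sc1 Bf_comm by metis

lemma Plk: "det3 (a::'a::field v3) b c * det3 z b d - det3 a b d * det3 z b c = det3 a b z * det3 c b d"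
  by (cases a rule: prod_cases3; cases b rule: prod_cases3; cases c rule: prod_cases3; cases d rule: prod_cases3; cases z rule: prod_cases3)
     (simp add: vdefs algebra_simps)

lemma Lf_zero: "Lf a c b d (0,0,0) = (0,0,0)"
  using Lf_sc[of a c b d 0 "(0,0,0)"] by (simp add: sc_def)

context
  fixes a c b d :: "'a::field v3"
  assumes gp: "GP a c b d" and two: "(2::'a) \<noteq> 0"
begin

lemma nzs': "nz a" "nz b" "nz c" "nz d" using nzs[OF gp two] by auto
lemma Ks': "det3 a c b \<noteq> 0" "det3 a c d \<noteq> 0" "det3 a b d \<noteq> 0" "det3 c b d \<noteq> 0"
  "det3 a b c \<noteq> 0" "det3 b c d \<noteq> 0" using Ks[OF gp two] by auto

lemma tangent:
  "tangent_at (abs_point a) (abs_point b) (abs_point c) (abs_point d) = polmap a c b d (abs_point a)"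
proof -
  define l where "l = cross a c"
  define m where "m = cross a d"
  define K1 where "K1 = det3 a b d"
  define D where "D = det3 a b c"
  have K1: "K1 \<noteq> 0" and D: "D \<noteq> 0" using Ks' unfolding K1_def D_def by auto
  have lm_eq: "cross l m = sc (det3 a c d) a" unfolding l_def m_def cross_cross_same ..
  have lm: "nz (cross l m)" unfolding lm_eq using Ks' nzs' by (simp add: sc_zero_iff)
  have nl: "nz l" "nz m" using lm by (auto simp: vdefs l_def m_def)
  have nac: "nz (cross a c)" "nz (cross a d)" using nl unfolding l_def m_def by auto
  have nab: "nz (cross a b)" using GP_cross[OF gp] .
  have JB: "comb K1 l (- D) m = sc (det3 a c d) (cross a b)"
  proof -
    have "comb (det3 b d a) (cross a c) (det3 c b a) (cross a d) = sc (det3 c d a) (cross a b)"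
      by (rule Jc)
    moreover have "det3 b d a = K1" unfolding K1_def by (rule dpr1)
    moreover have "det3 c b a = - D" unfolding D_def by (rule dp13)
    moreover have "det3 c d a = det3 a c d" by (rule dpr1)
    ultimately show ?thesis unfolding l_def m_def by simp
  qed
  have LA: "join (abs_point a) (abs_point c) = abs_line (comb 1 l 0 m)"
    using join_eq[of a c] nzs' nac unfolding l_def by simp
  have LB: "join (abs_point a) (abs_point d) = abs_line (comb 0 l 1 m)"
    using join_eq[of a d] nzs' nac unfolding m_def by simp
  have LC: "join (abs_point a) (abs_point b) = abs_line (comb K1 l (- D) m)"
    unfolding JB using join_eq[of a b] nzs' nab Ln_sc[of "det3 a c d" "cross a b"] Ks' by simp
  have LT: "polmap a c b d (abs_point a) = abs_line (comb K1 l D m)"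
    using pol_Pt[OF gp two nzs'(1)] Lf_vertex[of a c b d] unfolding K1_def D_def l_def m_def by metis
  have n10: "(1::'a, 0::'a) \<noteq> (0,0)" and n01: "(0::'a, 1::'a) \<noteq> (0,0)" by simp_all
  have nC: "(K1, - D) \<noteq> (0,0)" and nD: "(K1, D) \<noteq> (0,0)" using K1 by simp_all
  have harm: "harmonic_pencil (abs_line (comb 1 l 0 m)) (abs_line (comb 0 l 1 m))
       (abs_line (comb K1 l (- D) m)) (abs_line (comb K1 l D m))"
    unfolding span_pencil[OF lm n10 n01 nC nD] using K1 D two by (simp add: fd_def)
  show ?thesis
    unfolding tangent_at_def LA LB LC LT
  proof (rule the_equality)
    show "harmonic_pencil (abs_line (comb 1 l 0 m)) (abs_line (comb 0 l 1 m))
       (abs_line (comb K1 l (- D) m)) (abs_line (comb K1 l D m))" by (rule harm)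
  next
    fix t assume t: "harmonic_pencil (abs_line (comb 1 l 0 m)) (abs_line (comb 0 l 1 m))
       (abs_line (comb K1 l (- D) m)) t"
    obtain w where w: "nz w" "t = abs_line w" using line_ex by blast
    obtain Z where Z: "inc Z (abs_line l)" "inc Z (abs_line m)" "inc Z t"
      using t unfolding harmonic_pencil_def concurrent_def by auto
    obtain z where z: "nz z" "Z = abs_point z" using point_ex by blast
    have "dot z l = 0" "dot z m = 0" using Z z nl by (auto simp: inc_iff)
    then obtain k where k: "z = sc k (cross l m)" using perp2 lm by blast
    have k0: "k \<noteq> 0" using k z by (auto simp: sc_zero_iff)
    have "dot z w = 0" using Z z w by (simp add: inc_iff)
    then have "dot a w = 0" using k k0 Ks' unfolding lm_eq by (simp add: sc_simps)
    then have "det3 w l m = 0" unfolding det3_def lm_eq by (simp add: sc_simps dot_comm)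
    then obtain s r where sr: "w = comb s l r m" using span2 lm by blast
    have sr0: "(s, r) \<noteq> (0,0)" using sr w by auto
    have c1: "fd 1 0 K1 (- D) * fd 0 1 s r + fd 1 0 s r * fd 0 1 K1 (- D) = 0"
      using t unfolding sr w span_pencil[OF lm n10 n01 nC sr0] by blast
    have c2: "fd 1 0 K1 (- D) * fd 0 1 K1 D + fd 1 0 K1 D * fd 0 1 K1 (- D) = 0"
      using harm unfolding span_pencil[OF lm n10 n01 nC nD] by blast
    have "fd s r K1 D = 0"
      using fourth_unique[of 1 0 0 1 K1 "- D" s r K1 D] c1 c2 D by (simp add: fd_def)
    then show "t = abs_line (comb K1 l D m)"
      unfolding w sr using comb_Ln_eq_iff[OF lm sr0 nD] by simp
  qed
qed

lemma Bf_a: "Bf a c b d a v = det3 v a c * det3 a b d + det3 v a d * det3 a b c"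
  unfolding Bf_def by simp

lemma vertex_polar:
  assumes y: "nz y" and q: "Qf a c b d y = 0" and bf: "Bf a c b d a y = 0"
  shows "cross y a = (0,0,0)"
proof (cases "det3 y a b = 0")
  case True
  have "cross y a = (0,0,0) \<or> cross y b = (0,0,0)" using line_AB_conic[OF gp two y True q] .
  moreover have "cross y b \<noteq> (0,0,0)"
  proof
    assume "cross y b = (0,0,0)"
    then obtain k where k: "y = sc k b" using cross_zero_par nzs' by blast
    have "k \<noteq> 0" using k y by (auto simp: sc_zero_iff)
    moreover have "Bf a c b d a y = k * (- 2 * det3 a b c * det3 a b d)"
      unfolding k Bf_sc2 Bf_vertex ..
    ultimately show False using bf two Ks' by simp
  qed
  ultimately show ?thesis by blast
next
  case False
  define X1 where "X1 = det3 y a c"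
  define X3 where "X3 = det3 y a d"
  have e1: "X1 * det3 a b d + X3 * det3 a b c = 0" using bf unfolding Bf_a X1_def X3_def .
  have P: "det3 a b c * det3 y b d - det3 a b d * det3 y b c = det3 a b y * det3 c b d" by (rule Plk)
  have "det3 a b c * Qf a c b d y = X1 * (det3 a b y * det3 c b d)"
  proof -
    have "det3 a b c * Qf a c b d y = X1 * (det3 a b c * det3 y b d) + (X3 * det3 a b c) * det3 y b c"
      unfolding Qf_def X1_def X3_def by (simp add: algebra_simps)
    also have "X3 * det3 a b c = - (X1 * det3 a b d)" using e1 by (simp add: eq_neg_iff_add_eq_0 algebra_simps)
    finally show ?thesis using P by (simp add: algebra_simps)
  qed
  moreover have "det3 a b y \<noteq> 0" using False dpr2[where u=a and v=b and w=y] by metis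
  ultimately have "X1 = 0" using q Ks' by simp
  then have "X3 = 0" using e1 Ks' by simp
  then show ?thesis using vA[OF gp two y] \<open>X1 = 0\<close> unfolding X1_def X3_def by blast
qed

end

lemma GP_rot2: "GP a c b d \<Longrightarrow> GP b d a c" using GP_rot by blast
lemma GP_rot3: "GP a c b d \<Longrightarrow> GP d a c b" using GP_rot by blast

lemma Bf_rots: "Bf b d a c = Bf a c b d" "Bf d a c b = Bf a c b d"
  using Bf_rot[where a=a and c=c and b=b and d=d] Bf_rot[where a=c and c=b and b=d and d=a]
    Bf_rot[where a=b and c=d and b=a and d=c] by simp_all
lemma Qf_rots: "Qf b d a c = Qf a c b d" "Qf d a c b = Qf a c b d"
  using Qf_rot[where a=a and c=c and b=b and d=d] Qf_rot[where a=c and c=b and b=d and d=a]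
    Qf_rot[where a=b and c=d and b=a and d=c] by simp_all
lemma Lf_rots: "Lf b d a c = Lf a c b d" "Lf d a c b = Lf a c b d"
  using Lf_rot[where a=a and c=c and b=b and d=d] Lf_rot[where a=c and c=b and b=d and d=a]
    Lf_rot[where a=b and c=d and b=a and d=c] by simp_all


lemma polmap_rots: "polmap c b d a = polmap a c b d" "polmap b d a c = polmap a c b d"
  "polmap d a c b = polmap a c b d"
  unfolding polmap_def using Lf_rot[where a=a and c=c and b=b and d=d]
    Lf_rots(1)[where a=a and c=c and b=b and d=d] Lf_rots(2)[where a=a and c=c and b=b and d=d] by simp_all

context
  fixes a c b d :: "'a::field v3"
  assumes gp: "GP a c b d" and two: "(2::'a) \<noteq> 0"
begin

abbreviation "polv \<equiv> polmap a c b d"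

lemma nz4: "nz a" "nz b" "nz c" "nz d" using nzs[OF gp two] by auto
lemma K4: "det3 a c b \<noteq> 0" "det3 a c d \<noteq> 0" "det3 a b d \<noteq> 0" "det3 c b d \<noteq> 0"
  "det3 a b c \<noteq> 0" "det3 b c d \<noteq> 0" using Ks[OF gp two] by auto

lemma vpol:
  assumes y: "nz y" and q: "Qf a c b d y = 0" and v: "v \<in> {a,b,c,d}" and bf: "Bf a c b d v y = 0"
  shows "cross y v = (0,0,0)"
proof -
  have ga: "GP c b d a" "GP b d a c" "GP d a c b" using GP_rot[OF gp] GP_rot2[OF gp] GP_rot3[OF gp] by auto
  have "v = a \<Longrightarrow> ?thesis" using vertex_polar[OF gp two y q] bf by simp
  moreover have "v = b \<Longrightarrow> ?thesis" using vertex_polar[OF ga(2) two y] q bf Qf_rots(1)[where a=a and c=c and b=b and d=d]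
      Bf_rots(1)[where a=a and c=c and b=b and d=d] by simp
  moreover have "v = c \<Longrightarrow> ?thesis" using vertex_polar[OF ga(1) two y] q bf Qf_rot[where a=a and c=c and b=b and d=d]
      Bf_rot[where a=a and c=c and b=b and d=d] by simp
  moreover have "v = d \<Longrightarrow> ?thesis" using vertex_polar[OF ga(3) two y] q bf Qf_rots(2)[where a=a and c=c and b=b and d=d]
      Bf_rots(2)[where a=a and c=c and b=b and d=d] by simp
  ultimately show ?thesis using v by blast
qed

lemma conic_conj:
  assumes y: "nz y" and z: "nz z" and qy: "Qf a c b d y = 0" and qz: "Qf a c b d z = 0"
    and bf: "Bf a c b d y z = 0" and nv: "\<forall>v\<in>{a,b,c,d}. cross y v \<noteq> (0,0,0)"
  shows "cross y z = (0,0,0)"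
proof (rule ccontr)
  assume nyz: "cross y z \<noteq> (0,0,0)"
  define n where "n = cross y z"
  have ony: "dot v n \<noteq> 0" if v: "v \<in> {a,b,c,d}" for v
  proof
    assume "dot v n = 0"
    then have "det3 v y z = 0" unfolding n_def det3_def .
    then obtain s t where st: "v = comb s y t z" using span2 nyz by blast
    have "Bf a c b d v y = s * (2 * Qf a c b d y) + t * Bf a c b d y z"
      unfolding st Bf_comb1 Bf_self using Bf_comm[of a c b d z y] by simp
    then have "Bf a c b d v y = 0" using qy bf by simp
    then have "cross y v = (0,0,0)" using vpol[OF y qy v] by simp
    then show False using nv v by blast
  qed
  define w where "w = cross n (cross a b)"
  have nab: "nz (cross a b)" using GP_cross[OF gp] .
  have nw: "nz w"
  proof
    assume "w = (0,0,0)"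
    then obtain k where "n = sc k (cross a b)" using cross_zero_par nab unfolding w_def by blast
    then have "dot a n = 0" by (simp add: sc_simps)
    then show False using ony[of a] by simp
  qed
  have "dot w n = 0" "dot w (cross a b) = 0" unfolding w_def by simp_all
  then have "det3 w y z = 0" "det3 w a b = 0" unfolding n_def det3_def by simp_all
  obtain s t where st: "w = comb s y t z" using span2[OF \<open>det3 w y z = 0\<close> nyz] by blast
  have "Qf a c b d w = 0" unfolding st Qf_comb using qy qz bf by simp
  then have "cross w a = (0,0,0) \<or> cross w b = (0,0,0)"
    using line_AB_conic[OF gp two nw \<open>det3 w a b = 0\<close>] by simp
  moreover have "cross w v \<noteq> (0,0,0)" if "v \<in> {a,b,c,d}" for v
  proof
    assume "cross w v = (0,0,0)"
    then have "cross v w = (0,0,0)" using cross_anti[of v w] by (simp add: sc_def)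
    then obtain k where "v = sc k w" using cross_zero_par nw by blast
    then have "dot v n = 0" using \<open>dot w n = 0\<close> by (simp add: sc_simps)
    then show False using ony that by blast
  qed
  ultimately show False by blast
qed

lemma meetq:
  assumes y: "nz y" and v: "v \<in> {a,b,c,d}" and yv: "nz (cross y v)"
    and q: "Lf a c b d q = sc k (cross y v)" and k: "k \<noteq> 0"
  shows "nz q \<and> meet (polv (abs_point y)) (polv (abs_point v)) = abs_point q"
proof -
  have nv: "nz v" using v nz4 by auto
  have nq: "nz q"
  proof
    assume "q = (0,0,0)"
    then have "sc k (cross y v) = (0,0,0)" using q Lf_zero by metis
    then show False using k yv by (simp add: sc_zero_iff)
  qed
  have "abs_point y \<noteq> abs_point v" using yv y nv by (simp add: Pt_eq_iff)
  then have "polv (abs_point y) \<noteq> polv (abs_point v)" using pol_inj[OF gp two] by (meson injD)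
  then have d: "nz (cross (Lf a c b d y) (Lf a c b d v))"
    using pol_Pt[OF gp two y] pol_Pt[OF gp two nv] Lf_nz[OF gp two y] Lf_nz[OF gp two nv]
    by (simp add: Ln_eq_iff)
  have "dot q (Lf a c b d y) = dot y (Lf a c b d q)" by (simp add: dot_Lf Bf_comm)
  then have d1: "dot q (Lf a c b d y) = 0" unfolding q by (simp add: sc_simps)
  have "dot q (Lf a c b d v) = dot v (Lf a c b d q)" by (simp add: dot_Lf Bf_comm)
  then have d2: "dot q (Lf a c b d v) = 0" unfolding q by (simp add: sc_simps)
  show ?thesis using meet_unique[OF nq Lf_nz[OF gp two y] Lf_nz[OF gp two nv] d d1 d2]
      pol_Pt[OF gp two y] pol_Pt[OF gp two nv] nq by simp
qed

lemma coef_iff: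
  assumes y: "nz y" and nv: "\<forall>v\<in>{a,b,c,d}. cross y v \<noteq> (0,0,0)"
  shows "((det3 y a c \<noteq> 0 \<and> det3 y a d \<noteq> 0 \<and> det3 y b c \<noteq> 0 \<and> det3 y b d \<noteq> 0 \<and>
          det3 y a c * det3 y b d - det3 y b c * det3 y a d \<noteq> 0) \<and>
         det3 y a c * det3 y b d + det3 y a d * det3 y b c = 0) \<longleftrightarrow> Qf a c b d y = 0"
proof -
  define X1 where "X1 = det3 y a c"
  define X2 where "X2 = det3 y b d"
  define X3 where "X3 = det3 y a d"
  define X4 where "X4 = det3 y b c"
  have Q: "Qf a c b d y = X1 * X2 + X3 * X4" unfolding Qf_def X1_def X2_def X3_def X4_def ..
  have nzc: "nz (cross y a)" "nz (cross y b)" "nz (cross y c)" "nz (cross y d)" using nv by auto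
  show ?thesis unfolding X1_def[symmetric] X2_def[symmetric] X3_def[symmetric] X4_def[symmetric] Q
  proof
    assume "(X1 \<noteq> 0 \<and> X3 \<noteq> 0 \<and> X4 \<noteq> 0 \<and> X2 \<noteq> 0 \<and> X1 * X2 - X4 * X3 \<noteq> 0) \<and> X1 * X2 + X3 * X4 = 0"
    then show "X1 * X2 + X3 * X4 = 0" by blast
  next
    assume q: "X1 * X2 + X3 * X4 = 0"
    then have e: "X1 * X2 = - (X3 * X4)" by (simp add: eq_neg_iff_add_eq_0)
    have "X1 \<noteq> 0"
    proof
      assume "X1 = 0"
      then have "X3 = 0 \<or> X4 = 0" using e by simp
      then show False using vA[OF gp two y] vC[OF gp two y] nzc \<open>X1 = 0\<close> unfolding X1_def X3_def X4_def by auto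
    qed
    moreover have "X2 \<noteq> 0"
    proof
      assume "X2 = 0"
      then have "X3 = 0 \<or> X4 = 0" using e by simp
      then show False using vB[OF gp two y] vD[OF gp two y] nzc \<open>X2 = 0\<close> unfolding X2_def X3_def X4_def by auto
    qed
    moreover have "X3 \<noteq> 0"
    proof
      assume "X3 = 0"
      then have "X1 = 0 \<or> X2 = 0" using e by simp
      then show False using vA[OF gp two y] vD[OF gp two y] nzc \<open>X3 = 0\<close> unfolding X1_def X2_def X3_def by auto
    qed
    moreover have "X4 \<noteq> 0"
    proof
      assume "X4 = 0"
      then have "X1 = 0 \<or> X2 = 0" using e by simp
      then show False using vC[OF gp two y] vB[OF gp two y] nzc \<open>X4 = 0\<close> unfolding X1_def X2_def X4_def by auto
    qed
    moreover have "X1 * X2 - X4 * X3 \<noteq> 0"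
    proof -
      have h: "X1 * X2 - X4 * X3 = - 2 * (X3 * X4)" using e by (simp add: algebra_simps)
      have "- 2 * (X3 * X4) \<noteq> 0" using two \<open>X3 \<noteq> 0\<close> \<open>X4 \<noteq> 0\<close> by simp
      with h show ?thesis by metis
    qed
    ultimately show "(X1 \<noteq> 0 \<and> X3 \<noteq> 0 \<and> X4 \<noteq> 0 \<and> X2 \<noteq> 0 \<and> X1 * X2 - X4 * X3 \<noteq> 0) \<and> X1 * X2 + X3 * X4 = 0"
      using q by blast
  qed
qed

lemma dual_pencil:
  assumes y: "nz y" and nv: "\<forall>v\<in>{a,b,c,d}. cross y v \<noteq> (0,0,0)" and yab: "det3 y a b \<noteq> 0"
  shows "harmonic (meet (polv (abs_point y)) (polv (abs_point a))) (meet (polv (abs_point y)) (polv (abs_point b)))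
                  (meet (polv (abs_point y)) (polv (abs_point c))) (meet (polv (abs_point y)) (polv (abs_point d)))
         \<longleftrightarrow> Qf a c b d y = 0"
proof -
  have nzc: "nz (cross y a)" "nz (cross y b)" "nz (cross y c)" "nz (cross y d)" using nv by auto
  obtain p1 where p1: "Lf a c b d p1 = cross y a" using Lf_surj[OF gp two nzc(1)] by blast
  obtain p2 where p2: "Lf a c b d p2 = cross y b" using Lf_surj[OF gp two nzc(2)] by blast
  have lm: "cross (cross y a) (cross y b) = sc (det3 y a b) y" by (rule cross_cross_same)
  have p12: "nz (cross p1 p2)"
  proof
    assume "cross p1 p2 = (0,0,0)"
    moreover have "nz p2" using p2 nzc Lf_zero by metis
    ultimately obtain k where "p1 = sc k p2" using cross_zero_par by blast
    then have "cross y a = sc k (cross y b)" using p1 p2 Lf_sc by metis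
    then have "cross (cross y a) (cross y b) = (0,0,0)" by (simp add: cross_sc_zero)
    then show False using lm yab y by (simp add: sc_zero_iff)
  qed
  define k where "k = det3 a b y"
  have k: "k \<noteq> 0" using yab dpr2[where u=a and v=b and w=y] unfolding k_def by metis
  define X1 where "X1 = det3 y a c"
  define X2 where "X2 = det3 y b d"
  define X3 where "X3 = det3 y a d"
  define X4 where "X4 = det3 y b c"
  have s1: "det3 c b y = - X4" unfolding X4_def using dpr2[where u=c and v=b and w=y] dp23[where u=y and v=b and w=c] by metis
  have s2: "det3 a c y = X1" unfolding X1_def using dpr2[where u=a and v=c and w=y] by metis
  have s3: "det3 d b y = - X2" unfolding X2_def using dpr2[where u=d and v=b and w=y] dp23[where u=y and v=b and w=d] by metis
  have s4: "det3 a d y = X3" unfolding X3_def using dpr2[where u=a and v=d and w=y] by metis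
  have JC: "comb (- X4) (cross y a) X1 (cross y b) = sc k (cross y c)" using Jc[of c b y a] s1 s2 unfolding k_def by simp
  have JD: "comb (- X2) (cross y a) X3 (cross y b) = sc k (cross y d)" using Jc[of d b y a] s3 s4 unfolding k_def by simp
  have LC: "Lf a c b d (comb (- X4) p1 X1 p2) = sc k (cross y c)" unfolding Lf_comb p1 p2 JC ..
  have LD: "Lf a c b d (comb (- X2) p1 X3 p2) = sc k (cross y d)" unfolding Lf_comb p1 p2 JD ..
  have MA: "meet (polv (abs_point y)) (polv (abs_point a)) = abs_point (comb 1 p1 0 p2)"
    using meetq[OF y _ nzc(1), of p1 1] p1 by (simp add: sc_1)
  have MB: "meet (polv (abs_point y)) (polv (abs_point b)) = abs_point (comb 0 p1 1 p2)"
    using meetq[OF y _ nzc(2), of p2 1] p2 by (simp add: sc_1)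
  have MC: "meet (polv (abs_point y)) (polv (abs_point c)) = abs_point (comb (- X4) p1 X1 p2)"
    using meetq[OF y _ nzc(3) LC k] by simp
  have MD: "meet (polv (abs_point y)) (polv (abs_point d)) = abs_point (comb (- X2) p1 X3 p2)"
    using meetq[OF y _ nzc(4) LD k] by simp
  have nC: "(- X4, X1) \<noteq> (0,0)"
  proof
    assume "(- X4, X1) = (0,0)"
    then have "comb (- X4) p1 X1 p2 = (0,0,0)" by simp
    then have "sc k (cross y c) = (0,0,0)" using LC Lf_zero by metis
    then show False using k nzc by (simp add: sc_zero_iff)
  qed
  have nD: "(- X2, X3) \<noteq> (0,0)"
  proof
    assume "(- X2, X3) = (0,0)"
    then have "comb (- X2) p1 X3 p2 = (0,0,0)" by simp
    then have "sc k (cross y d) = (0,0,0)" using LD Lf_zero by metis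
    then show False using k nzc by (simp add: sc_zero_iff)
  qed
  have n10: "(1::'a, 0::'a) \<noteq> (0,0)" and n01: "(0::'a, 1::'a) \<noteq> (0,0)" by simp_all
  have "harmonic (meet (polv (abs_point y)) (polv (abs_point a))) (meet (polv (abs_point y)) (polv (abs_point b)))
                  (meet (polv (abs_point y)) (polv (abs_point c))) (meet (polv (abs_point y)) (polv (abs_point d)))
     \<longleftrightarrow> ((X1 \<noteq> 0 \<and> X3 \<noteq> 0 \<and> X4 \<noteq> 0 \<and> X2 \<noteq> 0 \<and> X1 * X2 - X4 * X3 \<noteq> 0) \<and> X1 * X2 + X3 * X4 = 0)"
    unfolding MA MB MC MD span_harmonic[OF p12 n10 n01 nC nD]
    by (simp add: fd_def algebra_simps)
  also have "\<dots> \<longleftrightarrow> Qf a c b d y = 0" using coef_iff[OF y nv] unfolding X1_def X2_def X3_def X4_def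
    by (simp add: algebra_simps)
  finally show ?thesis .
qed

end


context
  fixes a c b d :: "'a::field v3"
  assumes gp: "GP a c b d" and two: "(2::'a) \<noteq> 0"
begin

lemma tangents:
  "tangent_at (abs_point a) (abs_point b) (abs_point c) (abs_point d) = polmap a c b d (abs_point a)"
  "tangent_at (abs_point c) (abs_point d) (abs_point b) (abs_point a) = polmap a c b d (abs_point c)"
  "tangent_at (abs_point b) (abs_point a) (abs_point d) (abs_point c) = polmap a c b d (abs_point b)"
  "tangent_at (abs_point d) (abs_point c) (abs_point a) (abs_point b) = polmap a c b d (abs_point d)"
  using tangent[OF gp two] tangent[OF GP_rot[OF gp] two] tangent[OF GP_rot2[OF gp] two]
    tangent[OF GP_rot3[OF gp] two] polmap_rots[where a=a and c=c and b=b and d=d] by simp_all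

lemma bundle_mem:
  "l \<in> tangent_bundle (abs_point a) (abs_point c) (abs_point b) (abs_point d) \<longleftrightarrow>
     l \<in> {polmap a c b d (abs_point a), polmap a c b d (abs_point c), polmap a c b d (abs_point b), polmap a c b d (abs_point d)} \<or>
     (l \<notin> {polmap a c b d (abs_point a), polmap a c b d (abs_point c), polmap a c b d (abs_point b), polmap a c b d (abs_point d)} \<and>
      harmonic (meet l (polmap a c b d (abs_point a))) (meet l (polmap a c b d (abs_point b)))
               (meet l (polmap a c b d (abs_point c))) (meet l (polmap a c b d (abs_point d))))"
  unfolding tangent_bundle_def tangents harmonic_bundle_def by blast

lemma meetr:
  assumes y: "nz y" and v: "v \<in> {a,b,c,d}" and ne: "abs_point y \<noteq> abs_point v"
    and q: "nz q" "dot y (Lf a c b d q) = 0" "dot v (Lf a c b d q) = 0"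
  shows "meet (polmap a c b d (abs_point y)) (polmap a c b d (abs_point v)) = abs_point q"
proof -
  have nv: "nz v" using v nz4[OF gp two] by auto
  have "polmap a c b d (abs_point y) \<noteq> polmap a c b d (abs_point v)" using ne pol_inj[OF gp two] by (meson injD)
  then have d: "nz (cross (Lf a c b d y) (Lf a c b d v))"
    using pol_Pt[OF gp two y] pol_Pt[OF gp two nv] Lf_nz[OF gp two y] Lf_nz[OF gp two nv]
    by (simp add: Ln_eq_iff)
  have d1: "dot q (Lf a c b d y) = 0" using q(2) by (simp add: dot_Lf Bf_comm)
  have d2: "dot q (Lf a c b d v) = 0" using q(3) by (simp add: dot_Lf Bf_comm)
  show ?thesis using meet_unique[OF q(1) Lf_nz[OF gp two y] Lf_nz[OF gp two nv] d d1 d2]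
      pol_Pt[OF gp two y] pol_Pt[OF gp two nv] by simp
qed

lemma T1:
  assumes z: "nz z" and qz: "Qf a c b d z = 0"
  shows "polmap a c b d (abs_point z) \<in> tangent_bundle (abs_point a) (abs_point c) (abs_point b) (abs_point d)"
proof (cases "abs_point z \<in> {abs_point a, abs_point c, abs_point b, abs_point d}")
  case True
  then show ?thesis unfolding bundle_mem by auto
next
  case False
  have nv: "\<forall>v\<in>{a,b,c,d}. cross z v \<noteq> (0,0,0)" using False Pt_eq_iff[OF z] nz4[OF gp two] by auto
  have zab: "det3 z a b \<noteq> 0" using line_AB_conic[OF gp two z _ qz] nv by auto
  have "polmap a c b d (abs_point z) \<notin> {polmap a c b d (abs_point a), polmap a c b d (abs_point c), polmap a c b d (abs_point b), polmap a c b d (abs_point d)}"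
    using False pol_inj[OF gp two] by (auto dest: injD)
  moreover have "harmonic (meet (polmap a c b d (abs_point z)) (polmap a c b d (abs_point a))) (meet (polmap a c b d (abs_point z)) (polmap a c b d (abs_point b)))
               (meet (polmap a c b d (abs_point z)) (polmap a c b d (abs_point c))) (meet (polmap a c b d (abs_point z)) (polmap a c b d (abs_point d)))"
    using dual_pencil[OF gp two z nv zab] qz by simp
  ultimately show ?thesis unfolding bundle_mem by blast
qed

lemma T2:
  assumes z: "nz z" and qz: "Qf a c b d z = 0"
    and l: "l \<in> tangent_bundle (abs_point a) (abs_point c) (abs_point b) (abs_point d)"
    and zl: "inc (abs_point z) l"
  shows "l = polmap a c b d (abs_point z)"
proof -
  obtain w where w: "nz w" "l = abs_line w" using line_ex by blast
  obtain y where y: "nz y" "polmap a c b d (abs_point y) = l" using pol_surj_vec[OF gp two w(1)] w(2) by blast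
  have byz: "Bf a c b d y z = 0" using zl y inc_pol[OF gp two y(1) z] by simp
  show ?thesis
  proof (cases "l \<in> {polmap a c b d (abs_point a), polmap a c b d (abs_point c), polmap a c b d (abs_point b), polmap a c b d (abs_point d)}")
    case True
    then obtain v where v: "v \<in> {a,b,c,d}" "l = polmap a c b d (abs_point v)" by blast
    have nv: "nz v" using v nz4[OF gp two] by auto
    have "abs_point y = abs_point v" using v y pol_inj[OF gp two] by (auto dest: injD)
    then have "cross y v = (0,0,0)" using Pt_eq_iff[OF y(1) nv] by simp
    then obtain k where k: "y = sc k v" using cross_zero_par nv by blast
    then have "k \<noteq> 0" using y by (auto simp: sc_zero_iff)
    then have "Bf a c b d v z = 0" using byz k by (simp add: Bf_sc1)
    then have "cross z v = (0,0,0)" using vpol[OF gp two z qz v(1)] by simp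
    then have "abs_point z = abs_point v" using Pt_eq_iff[OF z nv] by simp
    then show ?thesis using v by simp
  next
    case False
    then have harm: "harmonic (meet l (polmap a c b d (abs_point a))) (meet l (polmap a c b d (abs_point b)))
               (meet l (polmap a c b d (abs_point c))) (meet l (polmap a c b d (abs_point d)))" using l unfolding bundle_mem by blast
    have nvP: "abs_point y \<noteq> abs_point v" if "v \<in> {a,b,c,d}" for v
      using False y that by auto
    have nv: "\<forall>v\<in>{a,b,c,d}. cross y v \<noteq> (0,0,0)"
    proof
      fix v assume v: "v \<in> {a,b,c,d}"
      then have "nz v" using nz4[OF gp two] by blast
      then show "cross y v \<noteq> (0,0,0)" using nvP[OF v] Pt_eq_iff[OF y(1)] by simp
    qed
    show ?thesis
    proof (cases "det3 y a b = 0")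
      case True
      obtain r where r: "Lf a c b d r = cross a b" using Lf_surj[OF gp two GP_cross[OF gp]] by blast
      have nr: "nz r" using r GP_cross[OF gp] Lf_zero by metis
      have "dot y (Lf a c b d r) = 0" using True unfolding r det3_def .
      moreover have "dot a (Lf a c b d r) = 0" "dot b (Lf a c b d r) = 0" unfolding r by simp_all
      ultimately have "meet l (polmap a c b d (abs_point a)) = abs_point r" "meet l (polmap a c b d (abs_point b)) = abs_point r"
        using meetr[OF y(1) _ nvP nr] y(2) by auto
      then show ?thesis using harm unfolding harmonic_def by simp
    next
      case False
      have "Qf a c b d y = 0" using dual_pencil[OF gp two y(1) nv False] harm y(2) by simp
      then have "cross y z = (0,0,0)" using conic_conj[OF gp two y(1) z _ qz byz nv] by simp
      then have "abs_point y = abs_point z" using Pt_eq_iff[OF y(1) z] by simp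
      then show ?thesis using y by simp
    qed
  qed
qed

end

theorem mainTheorem6:
  fixes A C B D :: "'a::field point"
  assumes char: "(2::'a) \<noteq> 0"
    and quad: "general_position A C B D"
  shows "\<exists>pol. polarity pol
     \<and> (\<forall>P. P \<in> harmonic_curve A C B D \<longleftrightarrow> inc P (pol P))
     \<and> (\<forall>P. P \<notin> harmonic_curve A C B D \<longrightarrow>
            harmonic_reflection P (pol P) ` harmonic_curve A C B D = harmonic_curve A C B D)
     \<and> (\<forall>Z \<in> harmonic_curve A C B D.
            pol Z \<in> tangent_bundle A C B D \<and> inc Z (pol Z) \<and>
            (\<forall>l \<in> tangent_bundle A C B D. inc Z l \<longrightarrow> l = pol Z))"
proof -
  obtain a where a: "nz a" "A = abs_point a" using point_ex by blast
  obtain b where b: "nz b" "B = abs_point b" using point_ex by blast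
  obtain c where c: "nz c" "C = abs_point c" using point_ex by blast
  obtain d where d: "nz d" "D = abs_point d" using point_ex by blast
  have gpos: "distinct [A, C, B, D]" "\<not> collinear {A, C, B}" "\<not> collinear {A, C, D}"
    "\<not> collinear {A, B, D}" "\<not> collinear {C, B, D}"
    using quad unfolding general_position_def by auto
  have gp: "GP a c b d" unfolding GP_def
    using noncollinear_det[OF a(1) c(1) b(1)] noncollinear_det[OF a(1) c(1) d(1)]
      noncollinear_det[OF a(1) b(1) d(1)] noncollinear_det[OF c(1) b(1) d(1)] gpos a b c d
    by auto
  note two = char
  let ?pol = "polmap a c b d"
  let ?C = "harmonic_curve A C B D"
  have curve: "abs_point p \<in> ?C \<longleftrightarrow> Qf a c b d p = 0" if "nz p" for p
    using curve_iff[OF gp two that] a b c d by simp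
  have incp: "inc (abs_point p) (?pol (abs_point p)) \<longleftrightarrow> Qf a c b d p = 0" if "nz p" for p
    using inc_pol[OF gp two that that] two by (simp add: Bf_self)
  show ?thesis
  proof (intro exI[of _ ?pol] conjI allI ballI impI)
    show "polarity ?pol" by (rule pol_polarity[OF gp two])
  next
    fix P :: "'a point"
    obtain p where p: "nz p" "P = abs_point p" using point_ex by blast
    show "P \<in> ?C \<longleftrightarrow> inc P (?pol P)" using curve[OF p(1)] incp[OF p(1)] p(2) by simp
  next
    fix P :: "'a point" assume P: "P \<notin> ?C"
    obtain p where p: "nz p" "P = abs_point p" using point_ex by blast
    have "Qf a c b d p \<noteq> 0" using P curve[OF p(1)] p(2) by simp
    then show "harmonic_reflection P (?pol P) ` ?C = ?C"
      using reflection[OF gp two p(1)] a b c d p(2) by simp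
  next
    fix Z :: "'a point" assume Z: "Z \<in> ?C"
    obtain z where z: "nz z" "Z = abs_point z" using point_ex by blast
    have qz: "Qf a c b d z = 0" using Z curve[OF z(1)] z(2) by simp
    show "?pol Z \<in> tangent_bundle A C B D" using T1[OF gp two z(1) qz] a b c d z(2) by simp
    show "inc Z (?pol Z)" using incp[OF z(1)] qz z(2) by simp
  next
    fix Z :: "'a point" and l assume Z: "Z \<in> ?C" and l: "l \<in> tangent_bundle A C B D" and zl: "inc Z l"
    obtain z where z: "nz z" "Z = abs_point z" using point_ex by blast
    have qz: "Qf a c b d z = 0" using Z curve[OF z(1)] z(2) by simp
    show "l = ?pol Z" using T2[OF gp two z(1) qz] l zl a b c d z(2) by simp
  qed
qed


end
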